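(* Let $\alpha\in(0,1)\cup(1,\infty)$ and let $W_1:X\mapsto Y_1$ and $W_2:X\mapsto Y_2$ be BISO channels with the same $\alpha$-capacity $C_\alpha$ and with $\alpha$-Lorenz curves $F_{\alpha,1}$ and $F_{\alpha,2}$ (both defined on the common interval $[0,d_C]$). Suppose $F_{\alpha,1}(t)\le F_{\alpha,2}(t)$ for all $t\in[0,d_C]$. Then: if $\alpha>1$, or $\frac12\le\alpha<1$, or $0<\alpha\le\frac13$, $W_1$ is $\alpha$-more capable than $W_2$; and if $\frac13\le\alpha\le\frac12$, $W_2$ is $\alpha$-more capable than $W_1$.
   Context: A binary input symmetric output (BISO) channel has input alphabet $\{0,1\}$ and output alphabet $\{0,\pm1,\dots,\pm l\}$ with $P_{Y|X}(y|0)=P_{Y|X}(-y|1)=:p_y$. The output $0$ (if present) is split into two outputs $0_+$ and $0_-$ with $P_{Y|X}(0_+|0)=P_{Y|X}(0_-|0)=p_0/2$ (and symmetrically for input $1$), so that the outputs are grouped into symmetric pairs $\{y,-y\}$, indexed below by "$y>0$". For $\beta>0$ let $k_\beta(q)=q^\beta+(1-q)^\beta$ for $q\in[0,1]$. Sibson's Rényi mutual information of an input distribution $P_X$ on $\{0,1\}$ and channel $P_{Y|X}$ is $I^S_\alpha(X:Y)=\frac{\alpha}{\alpha-1}\log\sum_y\big(\sum_x P_X(x)P_{Y|X}(y|x)^\alpha\big)^{1/\alpha}$; the $\alpha$-capacity is $C_\alpha(P_{Y|X})=\sup_{P_X}I^S_\alpha(X:Y)$. A channel $W_1:X\mapsto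 Y_1$ is $\alpha$-more capable than $W_2:X\mapsto Y_2$ if $I^S_\alpha(X:Y_1)\ge I^S_\alpha(X:Y_2)$ for every input distribution $P_X$. For a BISO channel, set $d_C=\sum_{y>0}(p_y^\alpha+p_{-y}^\alpha)^{1/\alpha}$ (for BISO channels $C_\alpha=\log2-\frac{\alpha}{\alpha-1}\log d_C$, so channels with equal $\alpha$-capacity have equal $d_C$). The $\alpha$-BISO partition: order the pairs $y>0$ by a permutation $\pi$ so that $k_{1/\alpha}\big(\frac{p_{\pi_i}^\alpha}{p_{\pi_i}^\alpha+p_{-\pi_i}^\alpha}\big)$ is ascending in $i$, and set $t_0=0$, $t_k=\sum_{i=1}^k(p_{\pi_i}^\alpha+p_{-\pi_i}^\alpha)^{1/\alpha}$. The $\alpha$-BISO curve is the step function $f_\alpha$ with $f_\alpha(0)=0$ and $f_\alpha(t)=k_{1/\alpha}\big(\frac{p_{\pi_k}^\alpha}{p_{\pi_k}^\alpha+p_{-\pi_k}^\alpha}\big)$ on $(t_{k-1},t_k]$. The $\alpha$-Lorenz curve is $F_\alpha(t)=\int_0^t f_\alpha(\tau)\,d\tau$ for $t\in[0,d_C]$. *)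

theory Defs
  imports "HOL-Analysis.Analysis"
begin

text \<open>A BISO channel with output alphabet {-l..l} is given by l and
  p :: int => real, where p y = P(Y=y | X=0) and P(Y=y | X=1) = p (-y).\<close>

definition BISO :: "nat \<Rightarrow> (int \<Rightarrow> real) \<Rightarrow> bool" where
  "BISO l p \<longleftrightarrow> (\<forall>y\<in>{-int l..int l}. p y \<ge> 0) \<and> (\<Sum>y\<in>{-int l..int l}. p y) = 1"

text \<open>Transition probability P_{Y|X}(y|x) for x in {0,1} (as bool: False = 0, True = 1).\<close>
definition chan :: "(int \<Rightarrow> real) \<Rightarrow> bool \<Rightarrow> int \<Rightarrow> real" where
  "chan p x y = (if x then p (-y) else p y)"

text \<open>Sibson's Renyi mutual information of input distribution P_X(0)=q, P_X(1)=1-q.\<close>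
definition sibsonMI :: "real \<Rightarrow> nat \<Rightarrow> (int \<Rightarrow> real) \<Rightarrow> real \<Rightarrow> real" where
  "sibsonMI \<alpha> l p q = \<alpha> / (\<alpha> - 1) *
     ln (\<Sum>y\<in>{-int l..int l}.
           (q * chan p False y powr \<alpha> + (1 - q) * chan p True y powr \<alpha>) powr (1 / \<alpha>))"

definition alpha_capacity :: "real \<Rightarrow> nat \<Rightarrow> (int \<Rightarrow> real) \<Rightarrow> real" where
  "alpha_capacity \<alpha> l p = (SUP q\<in>{0..1}. sibsonMI \<alpha> l p q)"

definition more_capable :: "real \<Rightarrow> nat \<Rightarrow> (int \<Rightarrow> real) \<Rightarrow> nat \<Rightarrow> (int \<Rightarrow> real) \<Rightarrow> bool" where
  "more_capable \<alpha> l1 p1 l2 p2 \<longleftrightarrow>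
     (\<forall>q\<in>{0..1}. sibsonMI \<alpha> l1 p1 q \<ge> sibsonMI \<alpha> l2 p2 q)"

definition kfun :: "real \<Rightarrow> real \<Rightarrow> real" where
  "kfun \<beta> q = q powr \<beta> + (1 - q) powr \<beta>"

text \<open>Symmetric pairs (p_y, p_{-y}) for y > 0, output 0 split into 0_+ and 0_- .\<close>
definition biso_pairs :: "nat \<Rightarrow> (int \<Rightarrow> real) \<Rightarrow> (real \<times> real) list" where
  "biso_pairs l p = (p 0 / 2, p 0 / 2) # map (\<lambda>y. (p y, p (-y))) [1..int l]"

definition pair_width :: "real \<Rightarrow> real \<times> real \<Rightarrow> real" where
  "pair_width \<alpha> ab = (fst ab powr \<alpha> + snd ab powr \<alpha>) powr (1 / \<alpha>)"

definition pair_height :: "real \<Rightarrow> real \<times> real \<Rightarrow> real" where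
  "pair_height \<alpha> ab =
     kfun (1 / \<alpha>) (fst ab powr \<alpha> / (fst ab powr \<alpha> + snd ab powr \<alpha>))"

definition dC :: "real \<Rightarrow> nat \<Rightarrow> (int \<Rightarrow> real) \<Rightarrow> real" where
  "dC \<alpha> l p = (\<Sum>ab\<leftarrow>biso_pairs l p. pair_width \<alpha> ab)"

definition sorted_pairs :: "real \<Rightarrow> nat \<Rightarrow> (int \<Rightarrow> real) \<Rightarrow> (real \<times> real) list" where
  "sorted_pairs \<alpha> l p = sort_key (pair_height \<alpha>) (biso_pairs l p)"

definition tpt :: "real \<Rightarrow> nat \<Rightarrow> (int \<Rightarrow> real) \<Rightarrow> nat \<Rightarrow> real" where
  "tpt \<alpha> l p k = (\<Sum>ab\<leftarrow>take k (sorted_pairs \<alpha> l p). pair_width \<alpha> ab)"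

definition biso_curve :: "real \<Rightarrow> nat \<Rightarrow> (int \<Rightarrow> real) \<Rightarrow> real \<Rightarrow> real" where
  "biso_curve \<alpha> l p t =
     (\<Sum>k<length (sorted_pairs \<alpha> l p).
        if tpt \<alpha> l p k < t \<and> t \<le> tpt \<alpha> l p (Suc k)
        then pair_height \<alpha> (sorted_pairs \<alpha> l p ! k) else 0)"

definition lorenz :: "real \<Rightarrow> nat \<Rightarrow> (int \<Rightarrow> real) \<Rightarrow> real \<Rightarrow> real" where
  "lorenz \<alpha> l p t = integral {0..t} (biso_curve \<alpha> l p)"

end

theory Submission
  imports Defs
begin


definition KK :: "real \<Rightarrow> real \<Rightarrow> real" where
  "KK b s = (1/2+s) powr b + (1/2-s) powr b"
definition KD :: "real \<Rightarrow> real \<Rightarrow> real" where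
  "KD b s = b * ((1/2+s) powr (b-1) - (1/2-s) powr (b-1))"
definition KDD :: "real \<Rightarrow> real \<Rightarrow> real" where
  "KDD b s = b * (b-1) * ((1/2+s) powr (b-2) + (1/2-s) powr (b-2))"
definition sig :: "real \<Rightarrow> real \<Rightarrow> real \<Rightarrow> real" where
  "sig b c s = c * KD b (c * s) / KD b s"

lemma KK_deriv:
  assumes "-1/2 < s" "s < 1/2"
  shows "(KK b has_real_derivative KD b s) (at s)"
  unfolding KK_def KD_def
  using assms
  by (auto intro!: derivative_eq_intros simp: algebra_simps)

lemma KD_deriv:
  assumes "-1/2 < s" "s < 1/2"
  shows "(KD b has_real_derivative KDD b s) (at s)"
  unfolding KDD_def KD_def
  using assms
  by (auto intro!: derivative_eq_intros simp: algebra_simps)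

lemma KK_cont:
  assumes "b > 0" "0 \<le> c" "c \<le> 1"
  shows "continuous_on {0..1/2} (\<lambda>s. KK b (c * s))"
proof -
  have 1: "continuous_on {0..1/2} (\<lambda>s::real. (1/2 + c * s) powr b)"
    using assms by (intro continuous_on_powr') (auto intro!: continuous_intros)
  have "\<forall>x\<in>{0..1/2::real}. c * x \<le> 1/2"
  proof
    fix x :: real assume "x \<in> {0..1/2}"
    then have "c * x \<le> 1*(1/2)" using assms by (intro mult_mono) auto
    then show "c * x \<le> 1/2" by simp
  qed
  then have 2: "continuous_on {0..1/2} (\<lambda>s::real. (1/2 - c * s) powr b)"
    using assms by (intro continuous_on_powr') (auto intro!: continuous_intros)
  show ?thesis unfolding KK_def using 1 2 by (intro continuous_on_add)
qed

lemma KK_cont1: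
  assumes "b > 0"
  shows "continuous_on {0..1/2} (KK b)"
  using KK_cont[OF assms, of 1] by simp

lemma KD_pos:
  assumes "b > 1" "0 < s" "s < 1/2"
  shows "KD b s > 0"
proof -
  have "(1/2-s) powr (b-1) < (1/2+s) powr (b-1)"
    using assms by (intro powr_less_mono2) auto
  then show ?thesis unfolding KD_def using assms by simp
qed

lemma KD_neg:
  assumes "0 < b" "b < 1" "0 < s" "s < 1/2"
  shows "KD b s < 0"
proof -
  have "(1/2+s) powr (b-1) < (1/2-s) powr (b-1)"
    using assms by (intro powr_less_mono2_neg) auto
  then show ?thesis unfolding KD_def using assms by (simp add: mult_pos_neg)
qed

lemma KD_ne:
  assumes "0 < b" "b \<noteq> 1" "0 < s" "s < 1/2"
  shows "KD b s \<noteq> 0"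
  using KD_pos[of b s] KD_neg[of b s] assms by (cases "b > 1") auto

lemma KD_zero: "KD b 0 = 0" unfolding KD_def by simp

lemma sig_bounds:
  assumes "0 < b" "b \<noteq> 1" "0 \<le> c" "c \<le> 1" "0 < s" "s < 1/2"
  shows "0 \<le> sig b c s \<and> sig b c s \<le> 1"
proof -
  have cs: "0 \<le> c * s" "c * s \<le> s" using assms by (auto simp: mult_left_le_one_le)
  have "0 \<le> KD b (c * s) / KD b s \<and> KD b (c * s) / KD b s \<le> 1"
  proof (cases "b > 1")
    case True
    have k: "KD b s > 0" using KD_pos True assms by auto
    have a: "0 \<le> KD b (c * s)"
      using KD_pos[OF True, of "c * s"] cs KD_zero[of b] assms
      by (cases "c * s = 0") (auto simp: less_le)
    have "(1/2 + c * s) powr (b-1) \<le> (1/2+s) powr (b-1)"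
      using cs True by (intro powr_mono2) auto
    moreover have "(1/2 - s) powr (b-1) \<le> (1/2-c * s) powr (b-1)"
      using cs True assms by (intro powr_mono2) auto
    ultimately have "KD b (c * s) \<le> KD b s" unfolding KD_def using assms
      by (intro mult_left_mono) auto
    then show ?thesis using a k by auto
  next
    case False
    then have b1: "b < 1" using assms by auto
    have k: "KD b s < 0" using KD_neg b1 assms by auto
    have a: "KD b (c * s) \<le> 0"
      using KD_neg[OF assms(1) b1, of "c * s"] cs KD_zero[of b] assms
      by (cases "c * s = 0") (auto simp: less_le)
    have "(1/2+s) powr (b-1) \<le> (1/2 + c * s) powr (b-1)"
      using cs b1 by (intro powr_mono2') auto
    moreover have "(1/2-c * s) powr (b-1) \<le> (1/2 - s) powr (b-1)"
      using cs b1 assms by (intro powr_mono2') auto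
    ultimately have "KD b s \<le> KD b (c * s)" unfolding KD_def using assms
      by (intro mult_left_mono) auto
    then show ?thesis using a k by (auto simp: divide_le_eq_1 zero_le_divide_iff)
  qed
  then have *: "0 \<le> KD b (c * s) / KD b s" "KD b (c * s) / KD b s \<le> 1" by auto
  have e: "sig b c s = c * (KD b (c * s) / KD b s)" unfolding sig_def by simp
  have "\<And>r. 0 \<le> r \<Longrightarrow> r \<le> 1 \<Longrightarrow> 0 \<le> c * r \<and> c * r \<le> 1"
    using assms by (auto intro: mult_le_one)
  then show ?thesis unfolding e using * by blast
qed

lemma my_gmvt:
  fixes f g f' g' :: "real \<Rightarrow> real"
  assumes "a < b" "continuous_on {a..b} f" "continuous_on {a..b} g"
    and "\<And>x. a < x \<Longrightarrow> x < b \<Longrightarrow> (f has_real_derivative f' x) (at x)"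
    and "\<And>x. a < x \<Longrightarrow> x < b \<Longrightarrow> (g has_real_derivative g' x) (at x)"
  shows "\<exists>z. a < z \<and> z < b \<and> (f b - f a) * g' z = (g b - g a) * f' z"
proof -
  define h where "h x = (f b - f a) * g x - (g b - g a) * f x" for x
  have hc: "continuous_on {a..b} h" unfolding h_def using assms
    by (auto intro!: continuous_intros)
  have hd: "(h has_real_derivative ((f b - f a) * g' x - (g b - g a) * f' x)) (at x)"
    if "a < x" "x < b" for x
    unfolding h_def using assms that by (auto intro!: derivative_eq_intros)
  obtain l z where z: "a < z" "z < b" "DERIV h z :> l" "h b - h a = (b - a) * l"
    using MVT[OF assms(1) hc] hd real_differentiable_def by blast
  have "h b - h a = 0" unfolding h_def by (simp add: algebra_simps)
  then have "l = 0" using z assms(1) by simp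
  moreover have "l = (f b - f a) * g' z - (g b - g a) * f' z"
    using DERIV_unique[OF z(3) hd[OF z(1,2)]] .
  ultimately show ?thesis using z by auto
qed


lemma KK_incr:
  assumes "b > 1" "0 \<le> s1" "s1 < s2" "s2 \<le> 1/2"
  shows "KK b s1 < KK b s2"
proof (rule DERIV_pos_imp_increasing_open[OF assms(3)])
  fix x assume "s1 < x" "x < s2"
  then show "\<exists>y. DERIV (KK b) x :> y \<and> y > 0"
    using assms KK_deriv[of x b] KD_pos[of b x] by auto
next
  show "continuous_on {s1..s2} (KK b)"
    using KK_cont1[of b] assms by (auto elim: continuous_on_subset)
qed

lemma KK_decr:
  assumes "0 < b" "b < 1" "0 \<le> s1" "s1 < s2" "s2 \<le> 1/2"
  shows "KK b s1 > KK b s2"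
proof (rule DERIV_neg_imp_decreasing_open[OF assms(4)])
  fix x assume "s1 < x" "x < s2"
  then show "\<exists>y. DERIV (KK b) x :> y \<and> y < 0"
    using assms KK_deriv[of x b] KD_neg[of b x] by auto
next
  show "continuous_on {s1..s2} (KK b)"
    using KK_cont1[of b] assms by (auto elim: continuous_on_subset)
qed

lemma KK_cauchy:
  assumes "0 < b" "b \<noteq> 1" "0 \<le> c" "c \<le> 1" "0 \<le> s1" "s1 < s2" "s2 \<le> 1/2"
  shows "\<exists>z. s1 < z \<and> z < s2 \<and> KK b (c * s2) - KK b (c * s1) = sig b c z * (KK b s2 - KK b s1)"
proof -
  have c1: "continuous_on {s1..s2} (\<lambda>s. KK b (c * s))"
    using KK_cont[of b c] assms by (auto elim: continuous_on_subset)
  have c2: "continuous_on {s1..s2} (KK b)"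
    using KK_cont1[of b] assms by (auto elim: continuous_on_subset)
  have d1: "((\<lambda>s. KK b (c * s)) has_real_derivative (c * KD b (c * x))) (at x)"
    if "s1 < x" "x < s2" for x
  proof -
    have "c * x \<le> 1 * x" using that assms by (intro mult_right_mono) auto
    moreover have "0 \<le> c * x" using that assms by simp
    ultimately have "-1/2 < c * x" "c * x < 1/2" using that assms by linarith+
    from DERIV_chain2[OF KK_deriv[OF this] DERIV_cmult_Id[of c x]]
    show ?thesis by (simp add: mult.commute)
  qed
  have d2: "(KK b has_real_derivative KD b x) (at x)" if "s1 < x" "x < s2" for x
    using KK_deriv that assms by auto
  obtain z where z: "s1 < z" "z < s2"
    "(KK b (c * s2) - KK b (c * s1)) * KD b z = (KK b s2 - KK b s1) * (c * KD b (c * z))"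
    using my_gmvt[OF assms(6) c1 c2 d1 d2] by blast
  have "KD b z \<noteq> 0" using KD_ne[of b z] z assms by auto
  then have "KK b (c * s2) - KK b (c * s1) = sig b c z * (KK b s2 - KK b s1)"
    using z(3) unfolding sig_def by (simp add: field_simps)
  then show ?thesis using z by auto
qed

definition MM :: "real \<Rightarrow> real \<Rightarrow> real" where
  "MM d r = d * (1/r - r) + r powr d - r powr (-d)"

lemma MM_deriv:
  assumes "r > 0"
  shows "(MM d has_real_derivative (-(d/r^2) * (1 - r powr (1+d)) * (1 - r powr (1-d)))) (at r)"
proof -
  define P where "P = r powr d"
  have P: "P > 0" using assms by (simp add: P_def)
  have e1: "r powr (d - 1) = P / r" using assms by (simp add: P_def powr_diff)
  have e2: "r powr (-d - 1) = 1 / (P * r)" using assms by (simp add: P_def powr_diff powr_minus field_simps)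
  have e3: "r powr (1+d) = r * P" using assms by (simp add: P_def powr_add)
  have e4: "r powr (1-d) = r / P" using assms by (simp add: P_def powr_diff)
  have "(MM d has_real_derivative (d * (-1/r^2 - 1) + d * r powr (d - 1) - (-d) * r powr (-d - 1))) (at r)"
    unfolding MM_def using assms
    by (auto intro!: derivative_eq_intros simp: power2_eq_square field_simps)
  moreover have "d * (-1/r^2 - 1) + d * r powr (d - 1) - (-d) * r powr (-d - 1)
     = (-(d/r^2) * (1 - r powr (1+d)) * (1 - r powr (1-d)))"
    unfolding e1 e2 e3 e4 using P assms by (simp add: field_simps power2_eq_square)
  ultimately show ?thesis by simp
qed

lemma one_minus_powr_sign:
  fixes r p :: real
  assumes "0 < r" "r < 1"
  shows "(p > 0 \<longrightarrow> 1 - r powr p > 0) \<and> (p < 0 \<longrightarrow> 1 - r powr p < 0) \<and> (p = 0 \<longrightarrow> 1 - r powr p = 0)"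
proof -
  have "p > 0 \<longrightarrow> r powr p < 1" using assms powr_less_mono2[of p r 1] by auto
  moreover have "p < 0 \<longrightarrow> 1 < r powr p" using assms powr_less_mono2_neg[of p r 1] by auto
  ultimately show ?thesis using assms by auto
qed

lemma MM_one: "MM d 1 = 0" unfolding MM_def by simp

lemma MM_sign:
  assumes "0 < r" "r < 1"
  shows "(d * (1-d) * (1+d) \<ge> 0 \<longrightarrow> MM d r \<ge> 0) \<and> (d * (1-d) * (1+d) \<le> 0 \<longrightarrow> MM d r \<le> 0)"
proof -
  define A where "A x = 1 - x powr (1+d)" for x
  define B where "B x = 1 - x powr (1-d)" for x
  have der: "DERIV (MM d) x :> (-(d/x^2) * A x * B x)" if "r \<le> x" for x
    using MM_deriv[of x d] that assms unfolding A_def B_def by auto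
  have key: "(d * (1-d) * (1+d) \<ge> 0 \<longrightarrow> d * A x * B x \<ge> 0) \<and> (d * (1-d) * (1+d) \<le> 0 \<longrightarrow> d * A x * B x \<le> 0)"
    if "r \<le> x" "x \<le> 1" for x
  proof (cases "x = 1")
    case True then show ?thesis by (simp add: A_def B_def)
  next
    case False
    then have x: "0 < x" "x < 1" using that assms by auto
    have sA: "(1+d > 0 \<longrightarrow> A x > 0) \<and> (1+d < 0 \<longrightarrow> A x < 0) \<and> (1+d = 0 \<longrightarrow> A x = 0)"
      using one_minus_powr_sign[OF x, of "1+d"] unfolding A_def by auto
    have sB: "(1-d > 0 \<longrightarrow> B x > 0) \<and> (1-d < 0 \<longrightarrow> B x < 0) \<and> (1-d = 0 \<longrightarrow> B x = 0)"
      using one_minus_powr_sign[OF x, of "1-d"] unfolding B_def by auto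
    consider "d < -1" | "d = -1" | "-1 < d \<and> d < 0" | "d = 0" | "0 < d \<and> d < 1" | "d = 1" | "d > 1"
      by linarith
    then show ?thesis
    proof cases
      case 1
      then have "A x < 0" "B x > 0" using sA sB by auto
      moreover have "d * (1-d) < 0" using 1 by (simp add: mult_neg_pos)
      then have "d * (1-d) * (1+d) > 0" using 1 by (simp add: mult_neg_neg)
      ultimately show ?thesis using 1
        by (simp add: mult_neg_neg mult_pos_neg zero_le_mult_iff)
    next
      case 2 then show ?thesis using sA by auto
    next
      case 3
      then have "A x > 0" "B x > 0" using sA sB by auto
      have "d * (1-d) < 0" using 3 by (simp add: mult_neg_pos)
      then have "d * (1-d) * (1+d) < 0" using 3 by (simp add: mult_neg_pos)
      moreover have "d * A x < 0" using 3 \<open>A x > 0\<close> by (simp add: mult_neg_pos)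
      then have "d * A x * B x < 0" using \<open>B x > 0\<close> by (simp add: mult_neg_pos)
      ultimately show ?thesis by linarith
    next
      case 4 then show ?thesis by simp
    next
      case 5
      then have "A x > 0" "B x > 0" using sA sB by auto
      have "d * (1-d) > 0" using 5 by simp
      then have "d * (1-d) * (1+d) > 0" using 5 by simp
      moreover have "d * A x > 0" using 5 \<open>A x > 0\<close> by simp
      then have "d * A x * B x > 0" using \<open>B x > 0\<close> by simp
      ultimately show ?thesis by linarith
    next
      case 6 then show ?thesis using sB by auto
    next
      case 7
      then have "A x > 0" "B x < 0" using sA sB by auto
      have "d * (1-d) < 0" using 7 by (simp add: mult_pos_neg)
      then have "d * (1-d) * (1+d) < 0" using 7 by (simp add: mult_neg_pos)
      moreover have "d * A x > 0" using 7 \<open>A x > 0\<close> by simp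
      then have "d * A x * B x < 0" using \<open>B x < 0\<close> by (simp add: mult_pos_neg)
      ultimately show ?thesis by linarith
    qed
  qed
  have r2: "r^2 > 0" using assms by simp
  show ?thesis
  proof (intro conjI impI)
    assume h: "d * (1-d) * (1+d) \<ge> 0"
    have "MM d 1 \<le> MM d r"
    proof (rule DERIV_nonpos_imp_nonincreasing[of r 1 "MM d"])
      fix x assume x: "r \<le> x" "x \<le> 1"
      have "d * A x * B x \<ge> 0" using key[OF x] h by auto
      moreover have "x^2 > 0" using x assms by simp
      ultimately have "-(d/x^2) * A x * B x \<le> 0"
        by (simp add: divide_nonneg_pos mult.assoc)
      then show "\<exists>y. DERIV (MM d) x :> y \<and> y \<le> 0" using der[OF x(1)] by blast
    qed (use assms in auto)
    then show "MM d r \<ge> 0" using MM_one by simp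
  next
    assume h: "d * (1-d) * (1+d) \<le> 0"
    have "MM d 1 \<ge> MM d r"
    proof (rule DERIV_nonneg_imp_nondecreasing[of r 1 "MM d"])
      fix x assume x: "r \<le> x" "x \<le> 1"
      have "d * A x * B x \<le> 0" using key[OF x] h by auto
      moreover have "x^2 > 0" using x assms by simp
      ultimately have "-(d/x^2) * A x * B x \<ge> 0"
        by (simp add: divide_nonpos_pos mult.assoc)
      then show "\<exists>y. DERIV (MM d) x :> y \<and> y \<ge> 0" using der[OF x(1)] by blast
    qed (use assms in auto)
    then show "MM d r \<le> 0" using MM_one by simp
  qed
qed


definition ET :: "real \<Rightarrow> real \<Rightarrow> real" where
  "ET b r = ((b-1)/2) * ((1-r) * (1 + r powr (b-2))) / (1 - r powr (b-1))"

lemma ET_deriv: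
  assumes "0 < r" "r < 1" "b \<noteq> 1"
  shows "(ET b has_real_derivative ((b-1)/2) * (r powr (b-2)) * MM (b-2) r / (1 - r powr (b-1))^2) (at r)"
proof -
  define P where "P = r powr (b-2)"
  have P: "P > 0" using assms by (simp add: P_def)
  have e1: "r powr (b - 2 - 1) = P / r" unfolding P_def using assms
    by (subst powr_diff) simp
  have e2: "r powr (b - 1) = r * P" unfolding P_def using assms powr_add[of r "b-2" 1]
    by (simp add: algebra_simps)
  have e3: "r powr (b - 1 - 1) = P" using assms by (simp add: P_def)
  have e4: "r powr (-(b-2)) = 1 / P" using assms powr_minus[of r "b-2"] by (simp add: P_def inverse_eq_divide)
  have nz: "1 - r * P \<noteq> 0" using one_minus_powr_sign[OF assms(1,2), of "b-1"] assms e2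
    by (cases "b - 1 > 0") auto
  have "(ET b has_real_derivative ((b-1)/2) * (((-1) * (1 + r powr (b-2)) + (1-r) * ((b-2) * r powr (b-2-1))) * (1 - r powr (b-1))
       - (- ((b-1) * r powr (b-1-1))) * ((1-r) * (1 + r powr (b-2)))) / (1 - r powr (b-1))^2) (at r)"
  proof -
    have dN: "((\<lambda>x. (1-x) * (1 + x powr (b-2))) has_real_derivative
          ((-1) * (1 + r powr (b-2)) + (1-r) * ((b-2) * r powr (b-2-1)))) (at r)"
      using assms by (auto intro!: derivative_eq_intros simp: algebra_simps)
    have dD: "((\<lambda>x. 1 - x powr (b-1)) has_real_derivative (- ((b-1) * r powr (b-1-1)))) (at r)"
      using assms by (auto intro!: derivative_eq_intros simp: algebra_simps)
    have nz': "1 - r powr (b-1) \<noteq> 0" using nz e2 by simp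
    have "ET b = (\<lambda>x. ((b-1)/2) * (((1-x) * (1 + x powr (b-2))) / (1 - x powr (b-1))))"
      by (auto simp: ET_def fun_eq_iff)
    then show ?thesis using DERIV_cmult[OF DERIV_quotient[OF dN dD nz'], of "(b-1)/2"]
      by (simp add: power2_eq_square)
  qed
  moreover have key: "(((-1) * (1 + r powr (b-2)) + (1-r) * ((b-2) * r powr (b-2-1))) * (1 - r powr (b-1))
       - (- ((b-1) * r powr (b-1-1))) * ((1-r) * (1 + r powr (b-2)))) = r powr (b-2) * MM (b-2) r"
    unfolding MM_def e1 e2 e3 e4 P_def[symmetric] using P assms
    by (simp add: field_simps)
  ultimately show ?thesis by (simp add: mult.assoc)
qed

lemma ET_mono:
  assumes "0 < r1" "r1 \<le> r2" "r2 < 1" "0 < b" "b \<noteq> 1"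
  shows "((b-2) * (1-(b-2)) \<ge> 0 \<longrightarrow> ET b r1 \<le> ET b r2) \<and>
         ((b-2) * (1-(b-2)) \<le> 0 \<longrightarrow> ET b r1 \<ge> ET b r2)"
proof -
  have sgn: "((b-2) * (1-(b-2)) \<ge> 0 \<longrightarrow> (b-1) * MM (b-2) x \<ge> 0) \<and>
             ((b-2) * (1-(b-2)) \<le> 0 \<longrightarrow> (b-1) * MM (b-2) x \<le> 0)"
    if "0 < x" "x < 1" for x
  proof -
    have M: "((b-2) * (1-(b-2)) * (1+(b-2)) \<ge> 0 \<longrightarrow> MM (b-2) x \<ge> 0) \<and>
             ((b-2) * (1-(b-2)) * (1+(b-2)) \<le> 0 \<longrightarrow> MM (b-2) x \<le> 0)"
      using MM_sign[OF that] by blast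
    show ?thesis
    proof (cases "b > 1")
      case True
      then have "1 + (b-2) > 0" by simp
      then have i1: "(b-2) * (1-(b-2)) \<ge> 0 \<Longrightarrow> (b-2) * (1-(b-2)) * (1+(b-2)) \<ge> 0"
        and i2: "(b-2) * (1-(b-2)) \<le> 0 \<Longrightarrow> (b-2) * (1-(b-2)) * (1+(b-2)) \<le> 0"
        by (simp_all add: mult_nonneg_nonneg mult_nonpos_nonneg)
      show ?thesis using M i1 i2 True by (auto simp: mult_nonneg_nonneg mult_nonneg_nonpos)
    next
      case False
      then have b1: "b - 1 < 0" using assms by simp
      then have "1 + (b-2) < 0" by simp
      then have i1: "(b-2) * (1-(b-2)) \<ge> 0 \<Longrightarrow> (b-2) * (1-(b-2)) * (1+(b-2)) \<le> 0"
        and i2: "(b-2) * (1-(b-2)) \<le> 0 \<Longrightarrow> (b-2) * (1-(b-2)) * (1+(b-2)) \<ge> 0"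
        by (simp_all add: mult_nonneg_nonpos mult_nonpos_nonpos)
      show ?thesis using M i1 i2 b1 by (auto simp: mult_nonpos_nonpos mult_nonpos_nonneg)
    qed
  qed
  have fac: "((b-1)/2) * (x powr (b-2)) * MM (b-2) x / (1 - x powr (b-1))^2
      = ((b-1) * MM (b-2) x) * ((x powr (b-2)) / (2 * (1 - x powr (b-1))^2))" for x
    by (simp add: field_simps)
  have pos: "(x powr (b-2)) / (2 * (1 - x powr (b-1))^2) \<ge> 0" for x
    by simp
  show ?thesis
  proof (intro conjI impI)
    assume h: "(b-2) * (1-(b-2)) \<ge> 0"
    show "ET b r1 \<le> ET b r2"
    proof (rule DERIV_nonneg_imp_nondecreasing[OF assms(2)])
      fix x assume x: "r1 \<le> x" "x \<le> r2"
      then have x': "0 < x" "x < 1" using assms by auto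
      have "(b-1) * MM (b-2) x \<ge> 0" using sgn[OF x'] h by auto
      then have "0 \<le> ((b-1) * MM (b-2) x) * ((x powr (b-2)) / (2 * (1 - x powr (b-1))^2))"
        using pos[of x] by (rule mult_nonneg_nonneg)
      then have "0 \<le> ((b-1)/2) * (x powr (b-2)) * MM (b-2) x / (1 - x powr (b-1))^2"
        by (simp only: fac)
      then show "\<exists>y. DERIV (ET b) x :> y \<and> y \<ge> 0"
        using ET_deriv[OF x' assms(5)] by blast
    qed
  next
    assume h: "(b-2) * (1-(b-2)) \<le> 0"
    show "ET b r1 \<ge> ET b r2"
    proof (rule DERIV_nonpos_imp_nonincreasing[OF assms(2)])
      fix x assume x: "r1 \<le> x" "x \<le> r2"
      then have x': "0 < x" "x < 1" using assms by auto
      have "(b-1) * MM (b-2) x \<le> 0" using sgn[OF x'] h by auto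
      then have "((b-1) * MM (b-2) x) * ((x powr (b-2)) / (2 * (1 - x powr (b-1))^2)) \<le> 0"
        using pos[of x] by (rule mult_nonpos_nonneg)
      then have "((b-1)/2) * (x powr (b-2)) * MM (b-2) x / (1 - x powr (b-1))^2 \<le> 0"
        by (simp only: fac)
      then show "\<exists>y. DERIV (ET b) x :> y \<and> y \<le> 0"
        using ET_deriv[OF x' assms(5)] by blast
    qed
  qed
qed

definition EE :: "real \<Rightarrow> real \<Rightarrow> real" where
  "EE b s = s * KDD b s / KD b s"

lemma EE_ET:
  assumes "0 < s" "s < 1/2" "0 < b" "b \<noteq> 1"
  shows "EE b s = ET b ((1/2-s)/(1/2+s))"
proof -
  define a where "a = 1/2 + s"
  define r where "r = (1/2-s)/(1/2+s)"
  have a: "a > 0" "1/2 - s = r * a" "s = a * (1 - r) / 2" using assms by (auto simp: a_def r_def field_simps)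
  have r: "r > 0" "r < 1" using assms by (auto simp: r_def field_simps)
  have p1: "(r * a) powr (b-2) = r powr (b-2) * a powr (b-2)" using a r by (simp add: powr_mult)
  have p2: "(r * a) powr (b-1) = r powr (b-1) * a powr (b-1)" using a r by (simp add: powr_mult)
  have p3: "a powr (b-1) = a powr (b-2) * a" using a powr_add[of a "b-2" 1] by (simp add: algebra_simps)
  have A: "a powr (b-2) > 0" using a by simp
  have nz: "1 - r powr (b-1) \<noteq> 0" using one_minus_powr_sign[OF r, of "b-1"] assms
    by (cases "b - 1 > 0") auto
  have "EE b s = s * (b * (b-1) * (a powr (b-2) + r powr (b-2) * a powr (b-2)))
        / (b * (a powr (b-2) * a - r powr (b-1) * (a powr (b-2) * a)))"
    unfolding EE_def KDD_def KD_def a_def[symmetric] a(2) p1 p2 p3 by simp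
  also have "\<dots> = (a * (1 - r) / 2) * (b * (b-1) * (a powr (b-2) + r powr (b-2) * a powr (b-2)))
        / (b * (a powr (b-2) * a - r powr (b-1) * (a powr (b-2) * a)))"
    by (simp only: a(3))
  also have "\<dots> = ET b r" unfolding ET_def using a A nz assms r
    by (simp add: field_simps)
  finally show ?thesis by (simp add: r_def)
qed


lemma EE_mono:
  assumes "0 < b" "b \<noteq> 1" "0 < s1" "s1 \<le> s2" "s2 < 1/2"
  shows "((b-2) * (1-(b-2)) \<ge> 0 \<longrightarrow> EE b s2 \<le> EE b s1) \<and>
         ((b-2) * (1-(b-2)) \<le> 0 \<longrightarrow> EE b s2 \<ge> EE b s1)"
proof -
  have r1: "0 < (1/2-s2)/(1/2+s2)" using assms by auto
  have r2: "(1/2-s2)/(1/2+s2) \<le> (1/2-s1)/(1/2+s1)" using assms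
    by (auto simp: field_simps)
  have r3: "(1/2-s1)/(1/2+s1) < 1" using assms by auto
  show ?thesis using ET_mono[OF r1 r2 r3 assms(1,2)] EE_ET[of s1 b] EE_ET[of s2 b] assms by auto
qed

lemma KD_prod_pos:
  assumes "0 < b" "b \<noteq> 1" "0 < x" "x < 1/2" "0 < y" "y < 1/2"
  shows "KD b x * KD b y > 0"
proof (cases "b > 1")
  case True then show ?thesis using KD_pos assms by auto
next
  case False then show ?thesis using KD_neg[of b x] KD_neg[of b y] assms by (auto intro: mult_neg_neg)
qed

lemma sig_deriv:
  assumes "0 < b" "b \<noteq> 1" "0 < s" "s < 1/2" "0 \<le> c" "c \<le> 1"
  shows "(sig b c has_real_derivative
     (c * KDD b (c * s) * c * KD b s - KDD b s * (c * KD b (c * s))) / (KD b s)^2) (at s)"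
proof -
  have cs: "0 \<le> c * s" "c * s \<le> s" using assms by (auto simp: mult_left_le_one_le)
  have d1: "((\<lambda>x. c * KD b (c * x)) has_real_derivative (c * (KDD b (c * s) * c))) (at s)"
    by (intro DERIV_cmult DERIV_chain2[OF KD_deriv DERIV_cmult_Id]) (use cs assms in linarith)+
  have "sig b c = (\<lambda>x. c * KD b (c * x) / KD b x)" by (auto simp: sig_def fun_eq_iff)
  then show ?thesis
    using DERIV_quotient[OF d1 KD_deriv[of s b] KD_ne[of b s]] assms
    by (simp add: power2_eq_square mult.assoc)
qed

lemma sig_mono:
  assumes "0 < b" "b \<noteq> 1" "0 \<le> c" "c \<le> 1" "0 < s1" "s1 \<le> s2" "s2 < 1/2"
  shows "((b-2) * (1-(b-2)) \<ge> 0 \<longrightarrow> sig b c s1 \<le> sig b c s2) \<and>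
         ((b-2) * (1-(b-2)) \<le> 0 \<longrightarrow> sig b c s1 \<ge> sig b c s2)"
proof (cases "c = 0")
  case True then show ?thesis by (simp add: sig_def)
next
  case False
  then have c0: "c > 0" using assms by simp
  define D where "D x = (c * KDD b (c * x) * c * KD b x - KDD b x * (c * KD b (c * x))) / (KD b x)^2" for x
  have der: "DERIV (sig b c) x :> D x" if "s1 \<le> x" "x \<le> s2" for x
    unfolding D_def using sig_deriv[of b x c] assms that by auto
  have Dform: "D x = c * (KD b (c * x) * KD b x) * (EE b (c * x) - EE b x) / (x * (KD b x)^2)"
    if "s1 \<le> x" "x \<le> s2" for x
  proof -
    have x: "0 < x" "x < 1/2" using that assms by auto
    have cx0: "0 < c * x" "c * x \<le> x" using x c0 assms by (auto simp: mult_left_le_one_le)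
    then have cx: "0 < c * x" "c * x < 1/2" using x by linarith+
    have n1: "KD b x \<noteq> 0" "KD b (c * x) \<noteq> 0" using KD_ne assms x cx by auto
    show ?thesis unfolding D_def EE_def using n1 x c0
      by (simp add: field_simps power2_eq_square)
  qed
  have pos: "c * (KD b (c * x) * KD b x) / (x * (KD b x)^2) > 0" if "s1 \<le> x" "x \<le> s2" for x
  proof -
    have x: "0 < x" "x < 1/2" using that assms by auto
    have cx0: "0 < c * x" "c * x \<le> x" using x c0 assms by (auto simp: mult_left_le_one_le)
    then have cx: "0 < c * x" "c * x < 1/2" using x by linarith+
    have "KD b (c * x) * KD b x > 0" using KD_prod_pos assms x cx by auto
    moreover have "KD b x \<noteq> 0" using KD_ne assms x by auto
    ultimately show ?thesis using c0 x by (simp add: divide_pos_pos)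
  qed
  have Dform2: "D x = (c * (KD b (c * x) * KD b x) / (x * (KD b x)^2)) * (EE b (c * x) - EE b x)"
    if "s1 \<le> x" "x \<le> s2" for x
    using Dform[OF that] by simp
  have Emono: "((b-2) * (1-(b-2)) \<ge> 0 \<longrightarrow> EE b x \<le> EE b (c * x)) \<and>
         ((b-2) * (1-(b-2)) \<le> 0 \<longrightarrow> EE b x \<ge> EE b (c * x))" if "s1 \<le> x" "x \<le> s2" for x
  proof -
    have x: "0 < x" "x < 1/2" using that assms by auto
    have cx: "0 < c * x" "c * x \<le> x" using x c0 assms by (auto simp: mult_left_le_one_le)
    show ?thesis using EE_mono[OF assms(1,2) cx x(2)] by auto
  qed
  show ?thesis
  proof (intro conjI impI)
    assume h: "(b-2) * (1-(b-2)) \<ge> 0"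
    show "sig b c s1 \<le> sig b c s2"
    proof (rule DERIV_nonneg_imp_nondecreasing[OF assms(6)])
      fix x assume x: "s1 \<le> x" "x \<le> s2"
      have "D x \<ge> 0" unfolding Dform2[OF x] using pos[OF x] Emono[OF x] h
        by (intro mult_nonneg_nonneg) auto
      then show "\<exists>y. DERIV (sig b c) x :> y \<and> y \<ge> 0" using der[OF x] by blast
    qed
  next
    assume h: "(b-2) * (1-(b-2)) \<le> 0"
    show "sig b c s1 \<ge> sig b c s2"
    proof (rule DERIV_nonpos_imp_nonincreasing[OF assms(6)])
      fix x assume x: "s1 \<le> x" "x \<le> s2"
      have "D x \<le> 0" unfolding Dform2[OF x] using pos[OF x] Emono[OF x] h
        by (intro mult_nonneg_nonpos) auto
      then show "\<exists>y. DERIV (sig b c) x :> y \<and> y \<le> 0" using der[OF x] by blast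
    qed
  qed
qed


definition GG :: "real \<Rightarrow> real \<Rightarrow> bool \<Rightarrow> real \<Rightarrow> real" where
  "GG b c up s0 = (if s0 = 0 then (if up then 0 else 1) else if s0 = 1/2 then (if up then 1 else 0) else sig b c s0)"

lemma GG_mono:
  assumes "0 < b" "b \<noteq> 1" "0 \<le> c" "c \<le> 1"
    and "up \<longrightarrow> (b-2) * (1-(b-2)) \<ge> 0" "\<not> up \<longrightarrow> (b-2) * (1-(b-2)) \<le> 0"
    and "0 \<le> s1" "s1 \<le> s2" "s2 \<le> 1/2"
  shows "(up \<longrightarrow> GG b c up s1 \<le> GG b c up s2) \<and> (\<not> up \<longrightarrow> GG b c up s1 \<ge> GG b c up s2)"
proof -
  have sb: "0 \<le> sig b c x \<and> sig b c x \<le> 1" if "0 < x" "x < 1/2" for x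
    using sig_bounds[OF assms(1-4) that] .
  consider "s1 = s2" | "s1 = 0" "0 < s2" "s2 < 1/2" | "s1 = 0" "s2 = 1/2"
    | "0 < s1" "s1 < 1/2" "s2 = 1/2" | "0 < s1" "s1 < s2" "s2 < 1/2"
    using assms by linarith
  then show ?thesis
  proof cases
    case 1 then show ?thesis by simp
  next
    case 2 then show ?thesis using sb[of s2] by (auto simp: GG_def)
  next
    case 3 then show ?thesis by (auto simp: GG_def)
  next
    case 4 then show ?thesis using sb[of s1] by (auto simp: GG_def)
  next
    case 5 then show ?thesis using sig_mono[OF assms(1-4), of s1 s2] assms by (auto simp: GG_def)
  qed
qed

lemma support:
  assumes "0 < b" "b \<noteq> 1" "0 \<le> c" "c \<le> 1"
    and "up \<longrightarrow> (b-2) * (1-(b-2)) \<ge> 0" "\<not> up \<longrightarrow> (b-2) * (1-(b-2)) \<le> 0"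
    and "0 \<le> s" "s \<le> 1/2" "0 \<le> s0" "s0 \<le> 1/2"
  shows "(up = (b > 1) \<longrightarrow> KK b (c * s) - KK b (c * s0) - GG b c up s0 * (KK b s - KK b s0) \<ge> 0) \<and>
         (up \<noteq> (b > 1) \<longrightarrow> KK b (c * s) - KK b (c * s0) - GG b c up s0 * (KK b s - KK b s0) \<le> 0)"
proof -
  consider "s = s0" | "s0 < s" | "s < s0" by linarith
  then show ?thesis
  proof cases
    case 1 then show ?thesis by simp
  next
    case 2
    obtain z where z: "s0 < z" "z < s" "KK b (c * s) - KK b (c * s0) = sig b c z * (KK b s - KK b s0)"
      using KK_cauchy[OF assms(1-4) assms(9) 2 assms(8)] by blast
    have gz: "GG b c up z = sig b c z" using z assms by (auto simp: GG_def)
    have e: "KK b (c * s) - KK b (c * s0) - GG b c up s0 * (KK b s - KK b s0)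
        = (GG b c up z - GG b c up s0) * (KK b s - KK b s0)" using z(3) gz by (simp add: algebra_simps)
    have X: "(up \<longrightarrow> GG b c up z - GG b c up s0 \<ge> 0) \<and> (\<not> up \<longrightarrow> GG b c up z - GG b c up s0 \<le> 0)"
      using GG_mono[OF assms(1-6) assms(9), of z] z assms by auto
    have Y: "(b > 1 \<longrightarrow> KK b s - KK b s0 > 0) \<and> (\<not> b > 1 \<longrightarrow> KK b s - KK b s0 < 0)"
      using KK_incr[of b s0 s] KK_decr[of b s0 s] assms 2 by auto
    show ?thesis unfolding e using X Y
      by (cases up; cases "b > 1") (auto simp: mult_nonneg_nonneg mult_nonpos_nonpos mult_nonneg_nonpos mult_nonpos_nonneg)
  next
    case 3
    obtain z where z: "s < z" "z < s0" "KK b (c * s0) - KK b (c * s) = sig b c z * (KK b s0 - KK b s)"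
      using KK_cauchy[OF assms(1-4) assms(7) 3 assms(10)] by blast
    have gz: "GG b c up z = sig b c z" using z assms by (auto simp: GG_def)
    have e: "KK b (c * s) - KK b (c * s0) - GG b c up s0 * (KK b s - KK b s0)
        = (GG b c up z - GG b c up s0) * (KK b s - KK b s0)" using z(3) gz by (simp add: algebra_simps)
    have X: "(up \<longrightarrow> GG b c up z - GG b c up s0 \<le> 0) \<and> (\<not> up \<longrightarrow> GG b c up z - GG b c up s0 \<ge> 0)"
      using GG_mono[OF assms(1-6), of z s0] z assms by auto
    have Y: "(b > 1 \<longrightarrow> KK b s - KK b s0 < 0) \<and> (\<not> b > 1 \<longrightarrow> KK b s - KK b s0 > 0)"
      using KK_incr[of b s s0] KK_decr[of b s s0] assms 3 by auto
    show ?thesis unfolding e using X Y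
      by (cases up; cases "b > 1") (auto simp: mult_nonneg_nonneg mult_nonpos_nonpos mult_nonneg_nonpos mult_nonpos_nonneg)
  qed
qed


definition HH :: "(nat \<Rightarrow> real) \<Rightarrow> nat \<Rightarrow> real \<Rightarrow> real" where
  "HH t i x = max 0 (min (x - t i) (t (Suc i) - t i))"
definition FF :: "(nat \<Rightarrow> real) \<Rightarrow> (nat \<Rightarrow> real) \<Rightarrow> nat \<Rightarrow> real \<Rightarrow> real" where
  "FF t h n x = (\<Sum>i<n. h i * HH t i x)"

lemma chain_mono:
  assumes "\<forall>i<n. t i \<le> t (Suc i)" "i \<le> j" "j \<le> n"
  shows "t i \<le> (t j :: real)"
  using assms(2,3)
proof (induction j)
  case 0 then show ?case by simp
next
  case (Suc j)
  show ?case
  proof (cases "i = Suc j")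
    case True then show ?thesis by simp
  next
    case False
    then have "i \<le> j" using Suc by simp
    then have "t i \<le> t j" using Suc by simp
    also have "t j \<le> t (Suc j)" using assms(1) Suc by simp
    finally show ?thesis .
  qed
qed

lemma sumHH:
  assumes "\<forall>i<n. t i \<le> t (Suc i)" "t 0 = 0" "x \<ge> 0"
  shows "(\<Sum>i<n. HH t i x) = min x (t n)"
  using assms(1)
proof (induction n)
  case 0 then show ?case using assms by simp
next
  case (Suc n)
  then have "t n \<le> t (Suc n)" by simp
  moreover have "(\<Sum>i<n. HH t i x) = min x (t n)" using Suc by simp
  ultimately show ?case unfolding HH_def by (simp add: max_def min_def)
qed

lemma HH_mono: "t i \<le> t (Suc i) \<Longrightarrow> x \<le> y \<Longrightarrow> HH t i x \<le> HH t i y"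
  unfolding HH_def by (simp add: max_def min_def)

lemma HH_at:
  assumes "\<forall>i<m. t i \<le> t (Suc i)" "j \<le> m" "k < m"
  shows "HH t k (t j) = (if k < j then t (Suc k) - t k else 0)"
proof (cases "k < j")
  case True
  then have "t (Suc k) \<le> t j" using chain_mono[OF assms(1), of "Suc k" j] assms by simp
  moreover have "t k \<le> t (Suc k)" using assms by simp
  ultimately show ?thesis using True unfolding HH_def by (simp add: max_def min_def)
next
  case False
  then have "t j \<le> t k" using chain_mono[OF assms(1), of j k] assms by simp
  then show ?thesis using False unfolding HH_def by (simp add: max_def min_def)
qed

lemma FF_at:
  assumes "\<forall>i<m. t i \<le> t (Suc i)" "j \<le> m"
  shows "FF t h m (t j) = (\<Sum>k<j. h k * (t (Suc k) - t k))"
proof -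
  have "FF t h m (t j) = (\<Sum>k<m. if k \<in> {..<j} then h k * (t (Suc k) - t k) else 0)"
    unfolding FF_def using HH_at[OF assms] by (intro sum.cong) auto
  also have "\<dots> = (\<Sum>k\<in>{..<m} \<inter> {..<j}. h k * (t (Suc k) - t k))"
    by (simp add: sum.inter_restrict)
  also have "{..<m} \<inter> {..<j} = {..<j}" using assms by auto
  finally show ?thesis .
qed

lemma abel:
  fixes g G :: "nat \<Rightarrow> real"
  assumes "\<forall>j. Suc j < m \<longrightarrow> g j \<le> g (Suc j)" "G 0 = 0" "\<forall>j\<le>m. G j \<le> 0"
  shows "k \<le> m \<Longrightarrow> (\<Sum>j<k. g j * (G (Suc j) - G j)) \<ge> g (k - 1) * G k"
proof (induction k)
  case 0 then show ?case using assms by simp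
next
  case (Suc k)
  show ?case
  proof (cases "k = 0")
    case True then show ?thesis using assms by simp
  next
    case False
    have IH: "(\<Sum>j<k. g j * (G (Suc j) - G j)) \<ge> g (k - 1) * G k" using Suc by simp
    have gk: "g (k-1) \<le> g k" using assms(1) False Suc.prems
      by (metis Suc_diff_1 Suc_le_lessD not_gr_zero)
    have Gk: "G k \<le> 0" using assms(3) Suc.prems by simp
    have "(g (k-1) - g k) * G k \<ge> 0" using gk Gk by (simp add: mult_nonpos_nonpos)
    then have "(\<Sum>j<Suc k. g j * (G (Suc j) - G j)) \<ge> g k * G (Suc k)"
      using IH by (simp add: algebra_simps)
    then show ?thesis by simp
  qed
qed

lemma core:
  fixes t1 t2 h1 h2 v1 v2 g :: "nat \<Rightarrow> real"
  assumes m1: "\<forall>i<n. t1 i \<le> t1 (Suc i)" "t1 0 = 0" "t1 n = D"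
    and m2: "\<forall>j<m. t2 j \<le> t2 (Suc j)" "t2 0 = 0" "t2 m = D"
    and gm: "\<forall>j. Suc j < m \<longrightarrow> g j \<le> g (Suc j)"
    and sp: "\<forall>i<n. \<forall>j<m. v1 i \<ge> v2 j + g j * (h1 i - h2 j)"
    and lor: "\<forall>j\<le>m. FF t1 h1 n (t2 j) \<le> FF t2 h2 m (t2 j)"
    and tot: "FF t1 h1 n D = FF t2 h2 m D"
  shows "(\<Sum>i<n. (t1 (Suc i) - t1 i) * v1 i) \<ge> (\<Sum>j<m. (t2 (Suc j) - t2 j) * v2 j)"
proof -
  define Dl where "Dl i j = HH t1 i (t2 (Suc j)) - HH t1 i (t2 j)" for i j
  have t2r: "0 \<le> t2 j \<and> t2 j \<le> D" if "j \<le> m" for j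
    using chain_mono[OF m2(1), of 0 j] chain_mono[OF m2(1), of j m] that m2 by auto
  have t1r: "0 \<le> t1 i \<and> t1 (Suc i) \<le> D" if "i < n" for i
    using chain_mono[OF m1(1), of 0 i] chain_mono[OF m1(1), of "Suc i" n] that m1 by auto
  have a: "t1 (Suc i) - t1 i = (\<Sum>j<m. Dl i j)" if "i < n" for i
  proof -
    have "(\<Sum>j<m. Dl i j) = HH t1 i (t2 m) - HH t1 i (t2 0)"
      unfolding Dl_def by (rule sum_lessThan_telescope)
    also have "\<dots> = t1 (Suc i) - t1 i"
    proof -
      have h1: "t1 i \<le> t1 (Suc i)" "0 \<le> t1 i" "t1 (Suc i) \<le> D" using t1r[OF that] m1(1) that by auto
      have "HH t1 i D = t1 (Suc i) - t1 i" unfolding HH_def using h1 by (simp add: max_def min_def)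
      moreover have "HH t1 i 0 = 0" unfolding HH_def using h1 by (simp add: max_def min_def)
      ultimately show ?thesis using m2 by simp
    qed
    finally show ?thesis by simp
  qed
  have b: "Dl i j \<ge> 0" if "i < n" "j < m" for i j
    unfolding Dl_def using HH_mono[of t1 i "t2 j" "t2 (Suc j)"] m1 m2 that by simp
  have f: "(\<Sum>i<n. Dl i j) = t2 (Suc j) - t2 j" if "j < m" for j
  proof -
    have "(\<Sum>i<n. Dl i j) = (\<Sum>i<n. HH t1 i (t2 (Suc j))) - (\<Sum>i<n. HH t1 i (t2 j))"
      unfolding Dl_def by (simp add: sum_subtractf)
    also have "\<dots> = min (t2 (Suc j)) (t1 n) - min (t2 j) (t1 n)"
      using sumHH[OF m1(1,2)] t2r[of j] t2r[of "Suc j"] that by simp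
    also have "\<dots> = t2 (Suc j) - t2 j" using t2r[of j] t2r[of "Suc j"] that m1 by simp
    finally show ?thesis .
  qed
  have gfact: "(\<Sum>i<n. h1 i * Dl i j) = FF t1 h1 n (t2 (Suc j)) - FF t1 h1 n (t2 j)" for j
    unfolding FF_def Dl_def by (simp add: sum_subtractf right_diff_distrib)
  have hfact: "FF t2 h2 m (t2 (Suc j)) - FF t2 h2 m (t2 j) = h2 j * (t2 (Suc j) - t2 j)" if "j < m" for j
    using FF_at[OF m2(1), of "Suc j" h2] FF_at[OF m2(1), of j h2] that by simp
  define G where "G j = FF t1 h1 n (t2 j) - FF t2 h2 m (t2 j)" for j
  have G0: "G 0 = 0" unfolding G_def using FF_at[OF m1(1), of 0 h1] FF_at[OF m2(1), of 0 h2] m1(2) m2(2) by simp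
  have Gm: "G m = 0" unfolding G_def using tot m2 by simp
  have Gle: "\<forall>j\<le>m. G j \<le> 0" using lor unfolding G_def by auto
  have ab: "(\<Sum>j<m. g j * (G (Suc j) - G j)) \<ge> 0"
    using abel[OF gm G0 Gle, of m] Gm by simp
  have "(\<Sum>i<n. (t1 (Suc i) - t1 i) * v1 i) = (\<Sum>i<n. \<Sum>j<m. Dl i j * v1 i)"
    using a by (simp add: sum_distrib_right)
  also have "\<dots> = (\<Sum>j<m. \<Sum>i<n. Dl i j * v1 i)" by (rule sum.swap)
  also have "\<dots> \<ge> (\<Sum>j<m. \<Sum>i<n. Dl i j * (v2 j + g j * (h1 i - h2 j)))"
    using b sp by (intro sum_mono mult_left_mono) auto
  also have "(\<Sum>j<m. \<Sum>i<n. Dl i j * (v2 j + g j * (h1 i - h2 j)))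
      = (\<Sum>j<m. (v2 j - g j * h2 j) * (\<Sum>i<n. Dl i j) + g j * (\<Sum>i<n. h1 i * Dl i j))"
    by (intro sum.cong refl) (simp add: sum_distrib_left sum.distrib[symmetric] algebra_simps)
  also have "\<dots> = (\<Sum>j<m. (t2 (Suc j) - t2 j) * v2 j + g j * (G (Suc j) - G j))"
  proof (intro sum.cong refl)
    fix j assume "j \<in> {..<m}"
    then have j: "j < m" by simp
    show "(v2 j - g j * h2 j) * (\<Sum>i<n. Dl i j) + g j * (\<Sum>i<n. h1 i * Dl i j)
        = (t2 (Suc j) - t2 j) * v2 j + g j * (G (Suc j) - G j)"
    proof -
      have hj: "g j * (FF t2 h2 m (t2 (Suc j)) - FF t2 h2 m (t2 j)) = g j * (h2 j * (t2 (Suc j) - t2 j))"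
        using hfact[OF j] by simp
      have "(t2 (Suc j) - t2 j) * v2 j + g j * (G (Suc j) - G j)
         = (t2 (Suc j) - t2 j) * v2 j + g j * (FF t1 h1 n (t2 (Suc j)) - FF t1 h1 n (t2 j))
           - g j * (FF t2 h2 m (t2 (Suc j)) - FF t2 h2 m (t2 j))"
        unfolding G_def by (simp add: algebra_simps)
      also have "\<dots> = (t2 (Suc j) - t2 j) * v2 j + g j * (FF t1 h1 n (t2 (Suc j)) - FF t1 h1 n (t2 j))
           - g j * (h2 j * (t2 (Suc j) - t2 j))" unfolding hj ..
      finally show ?thesis unfolding f[OF j] gfact by (simp add: algebra_simps)
    qed
  qed
  also have "\<dots> = (\<Sum>j<m. (t2 (Suc j) - t2 j) * v2 j) + (\<Sum>j<m. g j * (G (Suc j) - G j))"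
    by (simp add: sum.distrib)
  finally show ?thesis using ab by linarith
qed


definition TT :: "real \<Rightarrow> real \<Rightarrow> real \<Rightarrow> real \<Rightarrow> real" where
  "TT al q a b = (q * a powr al + (1-q) * b powr al) powr (1/al)"
definition PT :: "real \<Rightarrow> real \<Rightarrow> real \<times> real \<Rightarrow> real" where
  "PT al q ab = TT al q (fst ab) (snd ab) + TT al q (snd ab) (fst ab)"
definition xpar :: "real \<Rightarrow> real \<times> real \<Rightarrow> real" where
  "xpar al ab = fst ab powr al / (fst ab powr al + snd ab powr al)"

lemma KK_abs: "KK b (\<bar>t\<bar>) = KK b t"
  unfolding KK_def by (cases "t \<ge> 0") (auto simp: add.commute)

lemma kfun_KK: "kfun b x = KK b (x - 1/2)"
  unfolding kfun_def KK_def by simp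

lemma xpar_range: "0 \<le> xpar al ab \<and> xpar al ab \<le> 1"
proof (cases "fst ab powr al + snd ab powr al = 0")
  case True then show ?thesis unfolding xpar_def by simp
next
  case False
  then have "fst ab powr al + snd ab powr al > 0"
    by (metis add_nonneg_nonneg order_less_le powr_ge_zero)
  then show ?thesis unfolding xpar_def by (simp add: divide_le_eq_1)
qed

lemma height_KK: "pair_height al ab = KK (1/al) \<bar>xpar al ab - 1/2\<bar>"
  unfolding pair_height_def xpar_def kfun_KK KK_abs by simp

lemma PT_KK:
  assumes "0 \<le> fst ab" "0 \<le> snd ab" "0 \<le> q" "q \<le> 1" "0 < al"
  shows "PT al q ab = pair_width al ab * KK (1/al) (\<bar>2*q-1\<bar> * \<bar>xpar al ab - 1/2\<bar>)"
proof -
  obtain a b where ab: "ab = (a, b)" by (cases ab)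
  define A where "A = a powr al"
  define B where "B = b powr al"
  have AB: "0 \<le> A" "0 \<le> B" unfolding A_def B_def by auto
  show ?thesis
  proof (cases "A + B = 0")
    case True
    then have "A = 0" "B = 0" using AB by auto
    then have "a = 0" "b = 0" unfolding A_def B_def by auto
    then show ?thesis unfolding PT_def TT_def pair_width_def ab A_def[symmetric] B_def[symmetric] by simp
  next
    case False
    then have S: "A + B > 0" using AB by simp
    define x where "x = A / (A + B)"
    define u where "u = q * x + (1-q) * (1-x)"
    have x: "0 \<le> x" "x \<le> 1" using AB S by (auto simp: x_def divide_le_eq_1)
    have "q * x \<le> q" "(1-q) * (1-x) \<le> 1 - q" using x assms by (auto intro: mult_left_le)
    then have u: "0 \<le> u" "u \<le> 1" unfolding u_def using x assms
      by (auto intro!: add_nonneg_nonneg mult_nonneg_nonneg)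
    have x1: "1 - x = B / (A + B)" using False unfolding x_def by (simp add: field_simps)
    have u2: "u = (q * A + (1-q) * B) / (A + B)" unfolding u_def x1 unfolding x_def
      by (simp add: add_divide_distrib)
    have u3: "1 - u = (q * B + (1-q) * A) / (A + B)" using False unfolding u2
      by (simp add: field_simps)
    have e1: "q * A + (1-q) * B = (A + B) * u" unfolding u2 using False by simp
    have e2: "q * B + (1-q) * A = (A + B) * (1 - u)" unfolding u3 using False by simp
    have "PT al q ab = (A+B) powr (1/al) * (u powr (1/al) + (1-u) powr (1/al))"
      unfolding PT_def TT_def ab A_def[symmetric] B_def[symmetric] fst_conv snd_conv e1 e2
      by (simp add: powr_mult distrib_left)
    also have "u powr (1/al) + (1-u) powr (1/al) = KK (1/al) ((2*q-1) * (x - 1/2))"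
      unfolding KK_def u_def by (simp add: algebra_simps)
    also have "\<dots> = KK (1/al) (\<bar>2*q-1\<bar> * \<bar>x - 1/2\<bar>)"
      by (subst KK_abs[symmetric]) (simp add: abs_mult KK_abs)
    finally show ?thesis unfolding pair_width_def xpar_def ab x_def A_def B_def
      by simp
  qed
qed

lemma width_height:
  assumes "0 \<le> fst ab" "0 \<le> snd ab" "0 < al"
  shows "pair_width al ab * pair_height al ab = fst ab + snd ab"
proof -
  obtain a b where ab: "ab = (a, b)" by (cases ab)
  have "PT al 1 ab = pair_width al ab * pair_height al ab"
    using PT_KK[of ab 1 al] assms height_KK[of al ab] by simp
  moreover have "PT al 1 ab = fst ab + snd ab"
    unfolding PT_def TT_def ab using assms ab by (simp add: powr_powr)
  ultimately show ?thesis by simp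
qed

lemma width_nonneg: "0 \<le> pair_width al ab"
  unfolding pair_width_def by simp


lemma sum_sym_split:
  fixes f :: "int \<Rightarrow> real"
  shows "(\<Sum>y\<in>{-int l..int l}. f y) = f 0 + (\<Sum>y\<in>{1..int l}. f y + f (-y))"
proof (induction l)
  case 0 then show ?case by simp
next
  case (Suc l)
  have s1: "{-int (Suc l)..int (Suc l)} = insert (int l + 1) (insert (-(int l + 1)) {-int l..int l})" by auto
  have s2: "{1..int (Suc l)} = insert (int l + 1) {1..int l}" by auto
  show ?case unfolding s1 s2 using Suc by (simp add: algebra_simps)
qed

lemma sum_list_upto: "sum_list (map f [1..int l]) = (\<Sum>y\<in>{1..int l}. f y)"
  using sum_set_upto_conv_sum_list_int[of f 1 "int l"] by simp

lemma TT_same: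
  assumes "0 \<le> a" "0 < al"
  shows "TT al q a a = a"
proof -
  have "q * a powr al + (1 - q) * a powr al = a powr al" by (simp add: algebra_simps)
  then have "TT al q a a = (a powr al) powr (1/al)" unfolding TT_def by simp
  also have "\<dots> = a powr (al * (1/al))" by (rule powr_powr)
  also have "\<dots> = a" using assms by simp
  finally show ?thesis .
qed

lemma sibson_SS:
  assumes "\<forall>y\<in>{-int l..int l}. p y \<ge> 0" "0 < al"
  shows "(\<Sum>y\<in>{-int l..int l}. (q * chan p False y powr al + (1 - q) * chan p True y powr al) powr (1 / al))
     = sum_list (map (PT al q) (biso_pairs l p))"
proof -
  have p0: "p 0 \<ge> 0" using assms by auto
  have "(\<Sum>y\<in>{-int l..int l}. (q * chan p False y powr al + (1 - q) * chan p True y powr al) powr (1 / al))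
     = (\<Sum>y\<in>{-int l..int l}. TT al q (p y) (p (-y)))" unfolding TT_def chan_def by simp
  also have "\<dots> = TT al q (p 0) (p 0) + (\<Sum>y\<in>{1..int l}. PT al q (p y, p (-y)))"
    by (subst sum_sym_split) (simp add: PT_def)
  also have "TT al q (p 0) (p 0) = PT al q (p 0 / 2, p 0 / 2)"
    unfolding PT_def using p0 assms TT_same[of "p 0" al q] TT_same[of "p 0 / 2" al q] by simp
  finally show ?thesis unfolding biso_pairs_def by (simp add: sum_list_upto o_def)
qed

lemma pairs_nonneg:
  assumes "\<forall>y\<in>{-int l..int l}. p y \<ge> 0"
  shows "ab \<in> set (biso_pairs l p) \<Longrightarrow> 0 \<le> fst ab \<and> 0 \<le> snd ab"
  using assms unfolding biso_pairs_def by auto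

lemma sum_list_mset_eq:
  fixes f :: "'a \<Rightarrow> real"
  shows "mset xs = mset ys \<Longrightarrow> sum_list (map f xs) = sum_list (map f ys)"
proof -
  assume h: "mset xs = mset ys"
  have "sum_list (map f xs) = sum_mset (mset (map f xs))" by (rule sum_mset_sum_list[symmetric])
  also have "\<dots> = sum_mset (image_mset f (mset xs))" by simp
  also have "\<dots> = sum_mset (image_mset f (mset ys))" using h by simp
  also have "\<dots> = sum_mset (mset (map f ys))" by simp
  also have "\<dots> = sum_list (map f ys)" by (rule sum_mset_sum_list)
  finally show ?thesis .
qed

lemma sorted_sum:
  fixes f :: "real \<times> real \<Rightarrow> real"
  shows "sum_list (map f (sorted_pairs al l p)) = sum_list (map f (biso_pairs l p))"
  unfolding sorted_pairs_def by (rule sum_list_mset_eq) simp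

lemma sum_list_nth: "sum_list (map f xs) = (\<Sum>i<length xs. f (xs ! i))"
  by (simp add: sum_list_sum_nth lessThan_atLeast0)


lemma ind_int:
  fixes a b t h :: real
  assumes "0 \<le> a" "a \<le> b" "0 \<le> t"
  shows "((\<lambda>s. if a < s \<and> s \<le> b then h else 0) has_integral (h * max 0 (min (t - a) (b - a)))) {0..t}"
proof -
  have e: "{a..b} \<inter> {0..t} = {a..min b t}" using assms by auto
  have "((\<lambda>s. if s \<in> {a..b} then h else 0) has_integral (h * max 0 (min (t - a) (b - a)))) {0..t}"
  proof (cases "a \<le> min b t")
    case True
    have I: "((\<lambda>s. h) has_integral (Henstock_Kurzweil_Integration.content {a..min b t} *\<^sub>R h)) {a..min b t}"
      by (rule has_integral_const_real)
    have E: "Henstock_Kurzweil_Integration.content {a..min b t} *\<^sub>R h = h * max 0 (min (t-a) (b-a))"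
      using True by (auto simp: max_def min_def split: if_splits)
    show ?thesis unfolding has_integral_restrict_Int e using I[unfolded E] .
  next
    case False
    then have "{a..min b t} = {}" by auto
    moreover have "h * max 0 (min (t-a) (b-a)) = 0" using False assms by (auto simp: max_def min_def split: if_splits)
    ultimately show ?thesis unfolding has_integral_restrict_Int e by auto
  qed
  then show ?thesis
    by (rule has_integral_spike[OF negligible_sing[of a], rotated]) auto
qed

lemma tpt_0: "tpt al l p 0 = 0" unfolding tpt_def by simp

lemma tpt_Suc:
  "k < length (sorted_pairs al l p) \<Longrightarrow>
   tpt al l p (Suc k) = tpt al l p k + pair_width al (sorted_pairs al l p ! k)"
  unfolding tpt_def by (simp add: take_Suc_conv_app_nth)

lemma tpt_mono: "\<forall>k<length (sorted_pairs al l p). tpt al l p k \<le> tpt al l p (Suc k)"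
  using tpt_Suc width_nonneg by auto

lemma tpt_end: "tpt al l p (length (sorted_pairs al l p)) = dC al l p"
  unfolding tpt_def dC_def using sorted_sum by simp

lemma curve_eq:
  "biso_curve al l p = (\<lambda>s. \<Sum>k<length (sorted_pairs al l p).
      (if tpt al l p k < s \<and> s \<le> tpt al l p (Suc k) then pair_height al (sorted_pairs al l p ! k) else 0))"
  unfolding biso_curve_def by (simp add: fun_eq_iff)

lemma lorenz_FF:
  assumes "0 \<le> t"
  shows "lorenz al l p t = FF (tpt al l p) (\<lambda>k. pair_height al (sorted_pairs al l p ! k)) (length (sorted_pairs al l p)) t"
proof -
  define T where "T = tpt al l p"
  define n where "n = length (sorted_pairs al l p)"
  have T0: "0 \<le> T k" if "k \<le> n" for k
    using chain_mono[OF tpt_mono[of al l p], of 0 k] that tpt_0 unfolding T_def n_def by simp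
  have "(biso_curve al l p has_integral
      (\<Sum>k<n. pair_height al (sorted_pairs al l p ! k) * HH T k t)) {0..t}"
    unfolding curve_eq T_def[symmetric] n_def[symmetric]
  proof (rule has_integral_sum)
    fix k assume "k \<in> {..<n}"
    then have k: "k < n" by simp
    show "((\<lambda>s. if T k < s \<and> s \<le> T (Suc k) then pair_height al (sorted_pairs al l p ! k) else 0)
        has_integral pair_height al (sorted_pairs al l p ! k) * HH T k t) {0..t}"
      unfolding HH_def
      using ind_int[of "T k" "T (Suc k)" t] T0[of k] tpt_mono[of al l p] k assms
      unfolding T_def n_def by auto
  qed simp
  then show ?thesis unfolding lorenz_def FF_def T_def n_def by (rule integral_unique)
qed


definition SSv :: "real \<Rightarrow> nat \<Rightarrow> (int \<Rightarrow> real) \<Rightarrow> real \<Rightarrow> real" where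
  "SSv al l p q = sum_list (map (PT al q) (biso_pairs l p))"

lemma MI_SS:
  assumes "BISO l p" "0 < al"
  shows "sibsonMI al l p q = al / (al - 1) * ln (SSv al l p q)"
  unfolding sibsonMI_def SSv_def using sibson_SS[of l p al q] assms unfolding BISO_def by simp

lemma L_nonneg:
  assumes "BISO l p" "k < length (sorted_pairs al l p)"
  shows "0 \<le> fst (sorted_pairs al l p ! k) \<and> 0 \<le> snd (sorted_pairs al l p ! k)"
proof -
  have "sorted_pairs al l p ! k \<in> set (biso_pairs l p)"
    using nth_mem[OF assms(2)] unfolding sorted_pairs_def by simp
  then show ?thesis using pairs_nonneg[of l p] assms(1) unfolding BISO_def by blast
qed

lemma SS_form:
  assumes "BISO l p" "0 < al" "0 \<le> q" "q \<le> 1"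
  shows "SSv al l p q = (\<Sum>k<length (sorted_pairs al l p).
      (tpt al l p (Suc k) - tpt al l p k) * KK (1/al) (\<bar>2*q-1\<bar> * \<bar>xpar al (sorted_pairs al l p ! k) - 1/2\<bar>))"
proof -
  have "SSv al l p q = sum_list (map (PT al q) (sorted_pairs al l p))"
    unfolding SSv_def using sorted_sum by metis
  also have "\<dots> = (\<Sum>k<length (sorted_pairs al l p). PT al q (sorted_pairs al l p ! k))"
    by (rule sum_list_nth)
  also have "\<dots> = (\<Sum>k<length (sorted_pairs al l p).
      (tpt al l p (Suc k) - tpt al l p k) * KK (1/al) (\<bar>2*q-1\<bar> * \<bar>xpar al (sorted_pairs al l p ! k) - 1/2\<bar>))"
  proof (intro sum.cong refl)
    fix k assume "k \<in> {..<length (sorted_pairs al l p)}"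
    then have k: "k < length (sorted_pairs al l p)" by simp
    show "PT al q (sorted_pairs al l p ! k) = (tpt al l p (Suc k) - tpt al l p k) *
        KK (1/al) (\<bar>2*q-1\<bar> * \<bar>xpar al (sorted_pairs al l p ! k) - 1/2\<bar>)"
      using PT_KK[of "sorted_pairs al l p ! k" q al] L_nonneg[OF assms(1) k] assms tpt_Suc[OF k] by simp
  qed
  finally show ?thesis .
qed

lemma total_one:
  assumes "BISO l p" "0 < al"
  shows "(\<Sum>k<length (sorted_pairs al l p).
      pair_height al (sorted_pairs al l p ! k) * (tpt al l p (Suc k) - tpt al l p k)) = 1"
proof -
  have "(\<Sum>k<length (sorted_pairs al l p).
      pair_height al (sorted_pairs al l p ! k) * (tpt al l p (Suc k) - tpt al l p k))
    = (\<Sum>k<length (sorted_pairs al l p). (\<lambda>ab. fst ab + snd ab) (sorted_pairs al l p ! k))"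
  proof (intro sum.cong refl)
    fix k assume "k \<in> {..<length (sorted_pairs al l p)}"
    then have k: "k < length (sorted_pairs al l p)" by simp
    show "pair_height al (sorted_pairs al l p ! k) * (tpt al l p (Suc k) - tpt al l p k)
        = (\<lambda>ab. fst ab + snd ab) (sorted_pairs al l p ! k)"
      using width_height[of "sorted_pairs al l p ! k" al] L_nonneg[OF assms(1) k] assms tpt_Suc[OF k]
      by (simp add: mult.commute)
  qed
  also have "\<dots> = sum_list (map (\<lambda>ab. fst ab + snd ab) (sorted_pairs al l p))"
    by (rule sum_list_nth[symmetric])
  also have "\<dots> = sum_list (map (\<lambda>ab. fst ab + snd ab) (biso_pairs l p))"
    by (rule sorted_sum)
  also have "\<dots> = p 0 + (\<Sum>y\<in>{1..int l}. p y + p (-y))"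
    unfolding biso_pairs_def by (simp add: sum_list_upto o_def)
  also have "\<dots> = (\<Sum>y\<in>{-int l..int l}. p y)" by (rule sum_sym_split[symmetric])
  also have "\<dots> = 1" using assms unfolding BISO_def by simp
  finally show ?thesis .
qed

lemma dC_sum: "dC al l p = (\<Sum>k<length (sorted_pairs al l p). tpt al l p (Suc k) - tpt al l p k)"
  using sum_lessThan_telescope[of "tpt al l p" "length (sorted_pairs al l p)"] tpt_end tpt_0 by simp

lemma dC_pos:
  assumes "BISO l p" "0 < al"
  shows "dC al l p > 0"
proof (rule ccontr)
  assume "\<not> dC al l p > 0"
  define n where "n = length (sorted_pairs al l p)"
  have w: "\<forall>k\<in>{..<n}. 0 \<le> tpt al l p (Suc k) - tpt al l p k" using tpt_mono unfolding n_def by auto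
  have "(\<Sum>k<n. tpt al l p (Suc k) - tpt al l p k) \<le> 0" using \<open>\<not> dC al l p > 0\<close> dC_sum unfolding n_def by simp
  moreover have "(\<Sum>k<n. tpt al l p (Suc k) - tpt al l p k) \<ge> 0" by (rule sum_nonneg) (use w in auto)
  ultimately have "(\<Sum>k<n. tpt al l p (Suc k) - tpt al l p k) = 0" by linarith
  then have "\<forall>k\<in>{..<n}. tpt al l p (Suc k) - tpt al l p k = 0"
    using sum_nonneg_eq_0_iff[of "{..<n}" "\<lambda>k. tpt al l p (Suc k) - tpt al l p k"] w by blast
  then have "(\<Sum>k<n. pair_height al (sorted_pairs al l p ! k) * (tpt al l p (Suc k) - tpt al l p k)) = 0" by simp
  then show False using total_one[OF assms] unfolding n_def by simp
qed

lemma KK0_pos: "KK b 0 > 0" unfolding KK_def by simp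

lemma SS_half:
  assumes "BISO l p" "0 < al"
  shows "SSv al l p (1/2) = KK (1/al) 0 * dC al l p"
  using SS_form[OF assms, of "1/2"] dC_sum[of al l p] by (simp add: sum_distrib_left mult.commute)

lemma KK_le_incr: "1 < b \<Longrightarrow> 0 \<le> x \<Longrightarrow> x \<le> y \<Longrightarrow> y \<le> 1/2 \<Longrightarrow> KK b x \<le> KK b y"
  using KK_incr[of b x y] by (cases "x = y") auto

lemma KK_le_decr: "0 < b \<Longrightarrow> b < 1 \<Longrightarrow> 0 \<le> x \<Longrightarrow> x \<le> y \<Longrightarrow> y \<le> 1/2 \<Longrightarrow> KK b y \<le> KK b x"
  using KK_decr[of b x y] by (cases "x = y") auto

lemma cs_range:
  assumes "0 \<le> q" "q \<le> 1"
  shows "0 \<le> \<bar>2*q-1\<bar> * \<bar>xpar al ab - 1/2\<bar> \<and> \<bar>2*q-1\<bar> * \<bar>xpar al ab - 1/2\<bar> \<le> \<bar>xpar al ab - 1/2\<bar>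
     \<and> \<bar>xpar al ab - 1/2\<bar> \<le> 1/2"
proof -
  have c: "\<bar>2*q-1\<bar> \<le> 1" using assms by auto
  have s: "\<bar>xpar al ab - 1/2\<bar> \<le> 1/2" using xpar_range[of al ab] unfolding abs_le_iff by auto
  have "\<bar>2*q-1\<bar> * \<bar>xpar al ab - 1/2\<bar> \<le> 1 * \<bar>xpar al ab - 1/2\<bar>"
    using c by (intro mult_right_mono) auto
  then show ?thesis using s by simp
qed

lemma SS_cmp:
  assumes "BISO l p" "0 < al" "al \<noteq> 1" "0 \<le> q" "q \<le> 1"
  shows "(al > 1 \<longrightarrow> SSv al l p q \<le> SSv al l p (1/2) \<and> SSv al l p q \<ge> 1) \<and>
         (al < 1 \<longrightarrow> SSv al l p q \<ge> SSv al l p (1/2))"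
proof -
  define n where "n = length (sorted_pairs al l p)"
  define w where "w k = tpt al l p (Suc k) - tpt al l p k" for k
  define sv where "sv k = \<bar>xpar al (sorted_pairs al l p ! k) - 1/2\<bar>" for k
  define c where "c = \<bar>2*q-1\<bar>"
  have w0: "0 \<le> w k" if "k < n" for k using tpt_mono that unfolding w_def n_def by auto
  have rng: "0 \<le> c * sv k \<and> c * sv k \<le> sv k \<and> sv k \<le> 1/2" for k
    using cs_range[OF assms(4,5)] unfolding c_def sv_def by blast
  have S: "SSv al l p q = (\<Sum>k<n. w k * KK (1/al) (c * sv k))"
    using SS_form[OF assms(1,2,4,5)] unfolding n_def w_def c_def sv_def by simp
  have S2: "SSv al l p (1/2) = (\<Sum>k<n. w k * KK (1/al) 0)"
    using SS_form[OF assms(1,2), of "1/2"] unfolding n_def w_def by simp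
  have S1: "(\<Sum>k<n. w k * KK (1/al) (sv k)) = 1"
    using total_one[OF assms(1,2)] height_KK unfolding n_def w_def sv_def by (simp add: mult.commute)
  show ?thesis
  proof (intro conjI impI)
    assume a: "al > 1"
    then have b: "0 < 1/al" "1/al < 1" using assms by auto
    show "SSv al l p q \<le> SSv al l p (1/2)" unfolding S S2
    proof (rule sum_mono)
      fix k assume "k \<in> {..<n}"
      have "KK (1/al) (c * sv k) \<le> KK (1/al) 0" using KK_le_decr[OF b, of 0 "c * sv k"] rng[of k] by auto
      then show "w k * KK (1/al) (c * sv k) \<le> w k * KK (1/al) 0"
        using w0 \<open>k \<in> {..<n}\<close> by (intro mult_left_mono) auto
    qed
    have "(\<Sum>k<n. w k * KK (1/al) (sv k)) \<le> (\<Sum>k<n. w k * KK (1/al) (c * sv k))"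
    proof (rule sum_mono)
      fix k assume "k \<in> {..<n}"
      have "KK (1/al) (sv k) \<le> KK (1/al) (c * sv k)" using KK_le_decr[OF b, of "c * sv k" "sv k"] rng[of k] by auto
      then show "w k * KK (1/al) (sv k) \<le> w k * KK (1/al) (c * sv k)"
        using w0 \<open>k \<in> {..<n}\<close> by (intro mult_left_mono) auto
    qed
    then show "SSv al l p q \<ge> 1" using S S1 by linarith
  next
    assume a: "al < 1"
    then have b: "1 < 1/al" using assms by auto
    show "SSv al l p q \<ge> SSv al l p (1/2)" unfolding S S2
    proof (rule sum_mono)
      fix k assume "k \<in> {..<n}"
      have "KK (1/al) 0 \<le> KK (1/al) (c * sv k)" using KK_le_incr[OF b, of 0 "c * sv k"] rng[of k] by auto
      then show "w k * KK (1/al) 0 \<le> w k * KK (1/al) (c * sv k)"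
        using w0 \<open>k \<in> {..<n}\<close> by (intro mult_left_mono) auto
    qed
  qed
qed

lemma SS_pos:
  assumes "BISO l p" "0 < al" "al \<noteq> 1" "0 \<le> q" "q \<le> 1"
  shows "SSv al l p q > 0"
proof -
  have h: "SSv al l p (1/2) > 0" using SS_half[OF assms(1,2)] dC_pos[OF assms(1,2)] KK0_pos by simp
  show ?thesis
  proof (cases "al > 1")
    case True then show ?thesis using SS_cmp[OF assms] by auto
  next
    case False then have "al < 1" using assms by auto
    then show ?thesis using SS_cmp[OF assms] h by auto
  qed
qed

lemma MI_le_half:
  assumes "BISO l p" "0 < al" "al \<noteq> 1" "0 \<le> q" "q \<le> 1"
  shows "sibsonMI al l p q \<le> sibsonMI al l p (1/2)"
proof -
  have p1: "SSv al l p q > 0" using SS_pos[OF assms] .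
  have p2: "SSv al l p (1/2) > 0" using SS_pos[OF assms(1-3)] by simp
  show ?thesis
  proof (cases "al > 1")
    case True
    then have "ln (SSv al l p q) \<le> ln (SSv al l p (1/2))" using SS_cmp[OF assms] p1 p2 by simp
    moreover have "al / (al - 1) > 0" using True by simp
    ultimately have "al / (al - 1) * ln (SSv al l p q) \<le> al / (al - 1) * ln (SSv al l p (1/2))"
      by (intro mult_left_mono) auto
    then show ?thesis unfolding MI_SS[OF assms(1,2)] .
  next
    case False
    then have a: "al < 1" using assms by auto
    then have "ln (SSv al l p q) \<ge> ln (SSv al l p (1/2))" using SS_cmp[OF assms] p1 p2 by simp
    moreover have "al / (al - 1) < 0" using a assms by (simp add: divide_pos_neg)
    ultimately have "al / (al - 1) * ln (SSv al l p q) \<le> al / (al - 1) * ln (SSv al l p (1/2))"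
      by (intro mult_left_mono_neg) auto
    then show ?thesis unfolding MI_SS[OF assms(1,2)] .
  qed
qed

lemma cap_half:
  assumes "BISO l p" "0 < al" "al \<noteq> 1"
  shows "alpha_capacity al l p = sibsonMI al l p (1/2)"
  unfolding alpha_capacity_def
  by (rule cSup_eq_maximum) (use MI_le_half[OF assms] in auto)

lemma dC_eq:
  assumes "BISO l1 p1" "BISO l2 p2" "0 < al" "al \<noteq> 1"
    and "alpha_capacity al l1 p1 = alpha_capacity al l2 p2"
  shows "dC al l1 p1 = dC al l2 p2"
proof -
  have "al / (al - 1) * ln (KK (1/al) 0 * dC al l1 p1) = al / (al - 1) * ln (KK (1/al) 0 * dC al l2 p2)"
    using assms(5) cap_half[OF assms(1,3,4)] cap_half[OF assms(2,3,4)]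
      MI_SS[OF assms(1,3)] MI_SS[OF assms(2,3)] SS_half[OF assms(1,3)] SS_half[OF assms(2,3)] by simp
  moreover have "al / (al - 1) \<noteq> 0" using assms by simp
  ultimately have "ln (KK (1/al) 0 * dC al l1 p1) = ln (KK (1/al) 0 * dC al l2 p2)" by simp
  moreover have "KK (1/al) 0 * dC al l1 p1 > 0" "KK (1/al) 0 * dC al l2 p2 > 0"
    using dC_pos[OF assms(1,3)] dC_pos[OF assms(2,3)] KK0_pos by auto
  ultimately have "KK (1/al) 0 * dC al l1 p1 = KK (1/al) 0 * dC al l2 p2" by simp
  then show ?thesis using KK0_pos[of "1/al"] by simp
qed


lemma GG_h_mono:
  assumes "0 < b" "b \<noteq> 1" "0 \<le> c" "c \<le> 1"
    and "up \<longrightarrow> (b-2) * (1-(b-2)) \<ge> 0" "\<not> up \<longrightarrow> (b-2) * (1-(b-2)) \<le> 0"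
    and "0 \<le> s" "s \<le> 1/2" "0 \<le> s'" "s' \<le> 1/2" "KK b s \<le> KK b s'"
  shows "(up = (b > 1) \<longrightarrow> GG b c up s \<le> GG b c up s') \<and> (up \<noteq> (b > 1) \<longrightarrow> GG b c up s' \<le> GG b c up s)"
proof (cases "b > 1")
  case True
  have ss: "s \<le> s'"
  proof (rule ccontr)
    assume "\<not> s \<le> s'"
    then have "KK b s' < KK b s" using KK_incr[OF True, of s' s] assms by auto
    then show False using assms by simp
  qed
  show ?thesis using GG_mono[OF assms(1-7) ss assms(10)] True by auto
next
  case False
  then have b1: "b < 1" using assms by auto
  have ss: "s' \<le> s"
  proof (rule ccontr)
    assume "\<not> s' \<le> s"
    then have "KK b s' < KK b s" using KK_decr[OF assms(1) b1, of s s'] assms by auto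
    then show False using assms by simp
  qed
  show ?thesis using GG_mono[OF assms(1-6) assms(9) ss assms(8)] False by auto
qed

lemma compare:
  assumes B1: "BISO l1 p1" and B2: "BISO l2 p2" and al: "0 < al" "al \<noteq> 1"
    and dc: "dC al l1 p1 = dC al l2 p2"
    and lor: "\<forall>t\<in>{0..dC al l1 p1}. lorenz al l1 p1 t \<le> lorenz al l2 p2 t"
    and q: "0 \<le> q" "q \<le> 1"
    and up1: "up \<longrightarrow> (1/al-2) * (1-(1/al-2)) \<ge> 0" and up2: "\<not> up \<longrightarrow> (1/al-2) * (1-(1/al-2)) \<le> 0"
  shows "(up = (1/al > 1) \<longrightarrow> SSv al l2 p2 q \<le> SSv al l1 p1 q) \<and>
         (up \<noteq> (1/al > 1) \<longrightarrow> SSv al l1 p1 q \<le> SSv al l2 p2 q)"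
proof -
  define b where "b = 1/al"
  have b: "0 < b" "b \<noteq> 1" using al by (auto simp: b_def)
  have ub1: "up \<longrightarrow> (b-2) * (1-(b-2)) \<ge> 0" and ub2: "\<not> up \<longrightarrow> (b-2) * (1-(b-2)) \<le> 0"
    using up1 up2 unfolding b_def by auto
  define c where "c = \<bar>2*q-1\<bar>"
  have c: "0 \<le> c" "c \<le> 1" using q by (auto simp: c_def)
  define n where "n = length (sorted_pairs al l1 p1)"
  define m where "m = length (sorted_pairs al l2 p2)"
  define T1 where "T1 = tpt al l1 p1"
  define T2 where "T2 = tpt al l2 p2"
  define s1 where "s1 k = \<bar>xpar al (sorted_pairs al l1 p1 ! k) - 1/2\<bar>" for k
  define s2 where "s2 k = \<bar>xpar al (sorted_pairs al l2 p2 ! k) - 1/2\<bar>" for k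
  define h1 where "h1 k = pair_height al (sorted_pairs al l1 p1 ! k)" for k
  define h2 where "h2 k = pair_height al (sorted_pairs al l2 p2 ! k)" for k
  define e where "e = (if up = (b > 1) then 1 else -1 :: real)"
  define v1 where "v1 k = e * KK b (c * s1 k)" for k
  define v2 where "v2 k = e * KK b (c * s2 k)" for k
  define g where "g j = e * GG b c up (s2 j)" for j
  define D where "D = dC al l1 p1"
  have hK1: "h1 k = KK b (s1 k)" for k unfolding h1_def s1_def b_def by (rule height_KK)
  have hK2: "h2 k = KK b (s2 k)" for k unfolding h2_def s2_def b_def by (rule height_KK)
  have r1: "0 \<le> s1 k \<and> s1 k \<le> 1/2" for k
    using cs_range[OF q, of al "sorted_pairs al l1 p1 ! k"] unfolding s1_def by auto
  have r2: "0 \<le> s2 k \<and> s2 k \<le> 1/2" for k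
    using cs_range[OF q, of al "sorted_pairs al l2 p2 ! k"] unfolding s2_def by auto
  have m1: "\<forall>i<n. T1 i \<le> T1 (Suc i)" "T1 0 = 0" "T1 n = D"
    using tpt_mono tpt_0 tpt_end unfolding T1_def n_def D_def by auto
  have m2: "\<forall>j<m. T2 j \<le> T2 (Suc j)" "T2 0 = 0" "T2 m = D"
    using tpt_mono tpt_0 tpt_end dc unfolding T2_def m_def D_def by auto
  have gm: "\<forall>j. Suc j < m \<longrightarrow> g j \<le> g (Suc j)"
  proof (intro allI impI)
    fix j assume j: "Suc j < m"
    have "sorted (map (pair_height al) (sorted_pairs al l2 p2))"
      unfolding sorted_pairs_def by simp
    then have "map (pair_height al) (sorted_pairs al l2 p2) ! j \<le> map (pair_height al) (sorted_pairs al l2 p2) ! Suc j"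
      using j unfolding m_def by (intro sorted_nth_mono) auto
    then have "h2 j \<le> h2 (Suc j)" using j unfolding h2_def m_def by simp
    then have "KK b (s2 j) \<le> KK b (s2 (Suc j))" unfolding hK2 .
    then have "(up = (b > 1) \<longrightarrow> GG b c up (s2 j) \<le> GG b c up (s2 (Suc j))) \<and>
       (up \<noteq> (b > 1) \<longrightarrow> GG b c up (s2 (Suc j)) \<le> GG b c up (s2 j))"
      using GG_h_mono[OF b c ub1 ub2, of "s2 j" "s2 (Suc j)"] r2[of j] r2[of "Suc j"] by auto
    then show "g j \<le> g (Suc j)" unfolding g_def e_def by auto
  qed
  have sp: "\<forall>i<n. \<forall>j<m. v1 i \<ge> v2 j + g j * (h1 i - h2 j)"
  proof (intro allI impI)
    fix i j assume "i < n" "j < m"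
    have X: "(up = (b > 1) \<longrightarrow> KK b (c * s1 i) - KK b (c * s2 j) - GG b c up (s2 j) * (KK b (s1 i) - KK b (s2 j)) \<ge> 0) \<and>
         (up \<noteq> (b > 1) \<longrightarrow> KK b (c * s1 i) - KK b (c * s2 j) - GG b c up (s2 j) * (KK b (s1 i) - KK b (s2 j)) \<le> 0)"
      using support[OF b c ub1 ub2, of "s1 i" "s2 j"] r1[of i] r2[of j] by auto
    define A where "A = KK b (c * s1 i) - KK b (c * s2 j) - GG b c up (s2 j) * (KK b (s1 i) - KK b (s2 j))"
    have eA: "e * A \<ge> 0" using X unfolding A_def[symmetric] e_def
      by (cases "up = (b > 1)") auto
    have id: "v1 i - (v2 j + g j * (h1 i - h2 j)) = e * A"
      unfolding v1_def v2_def g_def hK1 hK2 A_def by (simp add: algebra_simps)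
    show "v1 i \<ge> v2 j + g j * (h1 i - h2 j)" using eA id by linarith
  qed
  have t2r: "0 \<le> T2 j \<and> T2 j \<le> D" if "j \<le> m" for j
    using chain_mono[OF m2(1), of 0 j] chain_mono[OF m2(1), of j m] that m2 by auto
  have lor2: "\<forall>j\<le>m. FF T1 h1 n (T2 j) \<le> FF T2 h2 m (T2 j)"
  proof (intro allI impI)
    fix j assume j: "j \<le> m"
    have "lorenz al l1 p1 (T2 j) \<le> lorenz al l2 p2 (T2 j)" using lor t2r[OF j] unfolding D_def by auto
    then show "FF T1 h1 n (T2 j) \<le> FF T2 h2 m (T2 j)"
      using lorenz_FF[of "T2 j" al l1 p1] lorenz_FF[of "T2 j" al l2 p2] t2r[OF j]
      unfolding T1_def T2_def h1_def h2_def n_def m_def by simp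
  qed
  have tot1: "FF T1 h1 n D = 1"
    using FF_at[OF m1(1), of n h1] m1(3) total_one[OF B1 al(1)] unfolding h1_def T1_def n_def by simp
  have tot2: "FF T2 h2 m D = 1"
    using FF_at[OF m2(1), of m h2] m2(3) total_one[OF B2 al(1)] unfolding h2_def T2_def m_def by simp
  have core_res: "(\<Sum>i<n. (T1 (Suc i) - T1 i) * v1 i) \<ge> (\<Sum>j<m. (T2 (Suc j) - T2 j) * v2 j)"
    by (rule core[OF m1 m2 gm sp lor2]) (simp add: tot1 tot2)
  have S1: "(\<Sum>i<n. (T1 (Suc i) - T1 i) * v1 i) = e * SSv al l1 p1 q"
    unfolding SS_form[OF B1 al(1) q] v1_def T1_def n_def s1_def c_def b_def sum_distrib_left
    by (intro sum.cong refl) (rule mult.left_commute)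
  have S2: "(\<Sum>j<m. (T2 (Suc j) - T2 j) * v2 j) = e * SSv al l2 p2 q"
    unfolding SS_form[OF B2 al(1) q] v2_def T2_def m_def s2_def c_def b_def sum_distrib_left
    by (intro sum.cong refl) (rule mult.left_commute)
  show ?thesis using core_res unfolding S1 S2 e_def b_def by auto
qed

lemma MI_from_SS:
  assumes "BISO l1 p1" "BISO l2 p2" "0 < al" "al \<noteq> 1" "0 \<le> q" "q \<le> 1"
  shows "(al > 1 \<and> SSv al l2 p2 q \<le> SSv al l1 p1 q \<longrightarrow> sibsonMI al l2 p2 q \<le> sibsonMI al l1 p1 q) \<and>
         (al < 1 \<and> SSv al l1 p1 q \<le> SSv al l2 p2 q \<longrightarrow> sibsonMI al l2 p2 q \<le> sibsonMI al l1 p1 q) \<and>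
         (al < 1 \<and> SSv al l2 p2 q \<le> SSv al l1 p1 q \<longrightarrow> sibsonMI al l1 p1 q \<le> sibsonMI al l2 p2 q)"
proof -
  have p1: "SSv al l1 p1 q > 0" using SS_pos[OF assms(1,3,4,5,6)] .
  have p2: "SSv al l2 p2 q > 0" using SS_pos[OF assms(2,3,4,5,6)] .
  show ?thesis
  proof (intro conjI impI; elim conjE)
    assume a: "al > 1" and s: "SSv al l2 p2 q \<le> SSv al l1 p1 q"
    have "ln (SSv al l2 p2 q) \<le> ln (SSv al l1 p1 q)" using s p1 p2 by simp
    then have "al / (al - 1) * ln (SSv al l2 p2 q) \<le> al / (al - 1) * ln (SSv al l1 p1 q)"
      using a by (intro mult_left_mono) auto
    then show "sibsonMI al l2 p2 q \<le> sibsonMI al l1 p1 q" unfolding MI_SS[OF assms(1,3)] MI_SS[OF assms(2,3)] .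
  next
    assume a: "al < 1" and s: "SSv al l1 p1 q \<le> SSv al l2 p2 q"
    have "ln (SSv al l1 p1 q) \<le> ln (SSv al l2 p2 q)" using s p1 p2 by simp
    moreover have "al / (al - 1) \<le> 0" using a assms by (simp add: divide_nonneg_neg)
    ultimately have "al / (al - 1) * ln (SSv al l2 p2 q) \<le> al / (al - 1) * ln (SSv al l1 p1 q)"
      by (intro mult_left_mono_neg) auto
    then show "sibsonMI al l2 p2 q \<le> sibsonMI al l1 p1 q" unfolding MI_SS[OF assms(1,3)] MI_SS[OF assms(2,3)] .
  next
    assume a: "al < 1" and s: "SSv al l2 p2 q \<le> SSv al l1 p1 q"
    have "ln (SSv al l2 p2 q) \<le> ln (SSv al l1 p1 q)" using s p1 p2 by simp
    moreover have "al / (al - 1) \<le> 0" using a assms by (simp add: divide_nonneg_neg)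
    ultimately have "al / (al - 1) * ln (SSv al l1 p1 q) \<le> al / (al - 1) * ln (SSv al l2 p2 q)"
      by (intro mult_left_mono_neg) auto
    then show "sibsonMI al l1 p1 q \<le> sibsonMI al l2 p2 q" unfolding MI_SS[OF assms(1,3)] MI_SS[OF assms(2,3)] .
  qed
qed

theorem theorem1:
  fixes \<alpha> :: real and l1 l2 :: nat and p1 p2 :: "int \<Rightarrow> real"
  assumes "\<alpha> > 0" and "\<alpha> \<noteq> 1"
    and "BISO l1 p1" and "BISO l2 p2"
    and "alpha_capacity \<alpha> l1 p1 = alpha_capacity \<alpha> l2 p2"
    and "\<forall>t\<in>{0..dC \<alpha> l1 p1}. lorenz \<alpha> l1 p1 t \<le> lorenz \<alpha> l2 p2 t"
  shows "((\<alpha> > 1 \<or> (1/2 \<le> \<alpha> \<and> \<alpha> < 1) \<or> \<alpha> \<le> 1/3) \<longrightarrow> more_capable \<alpha> l1 p1 l2 p2)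
    \<and> ((1/3 \<le> \<alpha> \<and> \<alpha> \<le> 1/2) \<longrightarrow> more_capable \<alpha> l2 p2 l1 p1)"
proof -
  have dc: "dC \<alpha> l1 p1 = dC \<alpha> l2 p2" using dC_eq[OF assms(3,4,1,2,5)] .
  note cmp = compare[OF assms(3,4,1,2) dc assms(6)]
  note mi = MI_from_SS[OF assms(3,4,1,2)]
  show ?thesis
  proof (intro conjI impI)
    assume reg: "\<alpha> > 1 \<or> (1/2 \<le> \<alpha> \<and> \<alpha> < 1) \<or> \<alpha> \<le> 1/3"
    show "more_capable \<alpha> l1 p1 l2 p2" unfolding more_capable_def
    proof
      fix q :: real assume "q \<in> {0..1}"
      then have q: "0 \<le> q" "q \<le> 1" by auto
      have d: "(1/\<alpha>-2) * (1-(1/\<alpha>-2)) \<le> 0"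
      proof (cases "\<alpha> > 1")
        case True
        then have "1/\<alpha> < 1" using assms by simp
        then show ?thesis by (intro mult_nonpos_nonneg) auto
      next
        case False
        show ?thesis
        proof (cases "\<alpha> \<le> 1/3")
          case True
          then have "1/\<alpha> \<ge> 3" using assms by (simp add: field_simps)
          then show ?thesis by (intro mult_nonneg_nonpos) auto
        next
          case False
          then have "1/2 \<le> \<alpha>" using reg \<open>\<not> \<alpha> > 1\<close> by auto
          then have "1/\<alpha> \<le> 2" using assms by (simp add: field_simps)
          then show ?thesis by (intro mult_nonpos_nonneg) auto
        qed
      qed
      have c: "(False = (1/\<alpha> > 1) \<longrightarrow> SSv \<alpha> l2 p2 q \<le> SSv \<alpha> l1 p1 q) \<and>
         (False \<noteq> (1/\<alpha> > 1) \<longrightarrow> SSv \<alpha> l1 p1 q \<le> SSv \<alpha> l2 p2 q)"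
        using cmp[OF q, of False] d by auto
      show "sibsonMI \<alpha> l2 p2 q \<le> sibsonMI \<alpha> l1 p1 q"
      proof (cases "\<alpha> > 1")
        case True
        then have "\<not> 1/\<alpha> > 1" using assms by simp
        then show ?thesis using c mi[OF q] True by auto
      next
        case False
        then have a1: "\<alpha> < 1" using assms by simp
        then have "1/\<alpha> > 1" using assms by simp
        then show ?thesis using c mi[OF q] a1 by auto
      qed
    qed
  next
    assume reg: "1/3 \<le> \<alpha> \<and> \<alpha> \<le> 1/2"
    show "more_capable \<alpha> l2 p2 l1 p1" unfolding more_capable_def
    proof
      fix q :: real assume "q \<in> {0..1}"
      then have q: "0 \<le> q" "q \<le> 1" by auto
      have b2: "2 \<le> 1/\<alpha>" "1/\<alpha> \<le> 3" using reg assms by (simp_all add: field_simps)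
      then have d: "(1/\<alpha>-2) * (1-(1/\<alpha>-2)) \<ge> 0" by (intro mult_nonneg_nonneg) auto
      have c: "SSv \<alpha> l2 p2 q \<le> SSv \<alpha> l1 p1 q"
        using cmp[OF q, of True] d b2 by auto
      have a1: "\<alpha> < 1" using reg by simp
      show "sibsonMI \<alpha> l1 p1 q \<le> sibsonMI \<alpha> l2 p2 q"
        using c mi[OF q] a1 by auto
    qed
  qed
qed


end
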